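(* Let $\epsilon>0$ and $\mathcal E\in\{\mathrm{Lv},\mathrm{ShG}\}$. For all $t\ge0$, $\mathrm{Hess}\,v^{\mathcal E_\epsilon}_t\ge0$ (as a quadratic form on $X_\epsilon$ at every point); in particular $v^{\mathcal E_\epsilon}_t$ is convex.
   Context: Fix $m>0$, $\lambda>0$, $\beta>0$. $\Omega=\mathbb R^2/\mathbb Z^2$; for $\epsilon>0$ with $1/\epsilon\in\mathbb N$, $\Omega_\epsilon=\Omega\cap\epsilon\mathbb Z^2$, $X_\epsilon=\mathbb R^{\Omega_\epsilon}$, $\int_{\Omega_\epsilon}f\,dx=\epsilon^2\sum_{x\in\Omega_\epsilon}f(x)$. $(\Delta^\epsilon f)(x)=\epsilon^{-2}\sum_{y\sim x}(f(y)-f(x))$; $c^\epsilon_t=(-\Delta^\epsilon+m^2+1/t)^{-1}$ for $t\in(0,\infty)$ (as an operator w.r.t. inner product $\int_{\Omega_\epsilon}fg\,dx$), $c^\epsilon_0=0$. $\mathbf E_c$: expectation over a centred Gaussian $\zeta$ on $X_\epsilon$ with covariance $c$. $V^{\mathrm{Lv}}(s)=e^{\sqrt\beta s}$, $V^{\mathrm{ShG}}(s)=\cosh(\sqrt\beta s)$; $v_0^{\mathcal E_\epsilon}(\phi)=\lambda\int_{\Omega_\epsilon}\epsilon^{\beta/4\pi}V^{\mathcal E}(\phi_x)dx$; $e^{-v^{\mathcal E_\epsilon}_t(\phi)}=\mathbf E_{c^\epsilon_t}[e^{-v_0^{\mathcal E_\epsilon}(\phi+\zeta)}]$. *)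

theory Defs
  imports "HOL-Analysis.Analysis"
begin

text \<open>Lattice torus with spacing eps = 1/N (N a positive natural number).
  Sites are pairs (i,j) with i,j < N; fields are functions (nat * nat) => real,
  only their values on the sites matter.\<close>

type_synonym site = "nat \<times> nat"
type_synonym field = "site \<Rightarrow> real"

definition sites :: "nat \<Rightarrow> site set" where
  "sites N = {0..<N} \<times> {0..<N}"

definition nbrs :: "nat \<Rightarrow> site \<Rightarrow> site list" where
  "nbrs N x = [((fst x + 1) mod N, snd x), ((fst x + N - 1) mod N, snd x),
               (fst x, (snd x + 1) mod N), (fst x, (snd x + N - 1) mod N)]"

definition lat_int :: "nat \<Rightarrow> field \<Rightarrow> real" where
  "lat_int N f = (1 / real N)^2 * (\<Sum>x\<in>sites N. f x)"

definition lap :: "nat \<Rightarrow> field \<Rightarrow> field" where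
  "lap N f x = (real N)^2 * (\<Sum>y\<leftarrow>nbrs N x. f y - f x)"

text \<open>Quadratic form of the precision operator (c_t)^(-1) = -Lap + m^2 + 1/t
  with respect to the inner product lat_int.\<close>
definition prec_form :: "nat \<Rightarrow> real \<Rightarrow> real \<Rightarrow> field \<Rightarrow> real" where
  "prec_form N m t \<zeta> = lat_int N (\<lambda>x. \<zeta> x * (- lap N \<zeta> x + (m^2 + 1/t) * \<zeta> x))"

text \<open>Expectation over the centred Gaussian field on X_eps with covariance c_t
  (w.r.t. the inner product lat_int); for t = 0 the covariance is 0 (point mass at 0).\<close>
definition gauss_exp :: "nat \<Rightarrow> real \<Rightarrow> real \<Rightarrow> (field \<Rightarrow> real) \<Rightarrow> real" where
  "gauss_exp N m t F =
     (if t = 0 then F (\<lambda>_. 0)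
      else (\<integral>\<zeta>. F \<zeta> * exp (- prec_form N m t \<zeta> / 2) \<partial>(PiM (sites N) (\<lambda>_. lborel)))
         / (\<integral>\<zeta>. exp (- prec_form N m t \<zeta> / 2) \<partial>(PiM (sites N) (\<lambda>_. lborel))))"

datatype model = Lv | ShG

definition Vpot :: "model \<Rightarrow> real \<Rightarrow> real \<Rightarrow> real" where
  "Vpot E \<beta> s = (case E of Lv \<Rightarrow> exp (sqrt \<beta> * s) | ShG \<Rightarrow> cosh (sqrt \<beta> * s))"

definition v0 :: "nat \<Rightarrow> real \<Rightarrow> real \<Rightarrow> model \<Rightarrow> field \<Rightarrow> real" where
  "v0 N lam \<beta> E \<phi> = lam * lat_int N (\<lambda>x. (1 / real N) powr (\<beta> / (4 * pi)) * Vpot E \<beta> (\<phi> x))"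

definition vt :: "nat \<Rightarrow> real \<Rightarrow> real \<Rightarrow> real \<Rightarrow> model \<Rightarrow> real \<Rightarrow> field \<Rightarrow> real" where
  "vt N m lam \<beta> E t \<phi> = - ln (gauss_exp N m t (\<lambda>\<zeta>. exp (- v0 N lam \<beta> E (\<lambda>x. \<phi> x + \<zeta> x))))"

end

theory Submission
  imports Defs "HOL-Probability.Distributions"
begin
lemma conv_mid:
  fixes A :: "real set"
  assumes iv: "is_interval A" and ne: "A \<noteq> {}" and ba: "bdd_above A" and bb: "bdd_below A"
    and t: "0 < t" "t < 1"
  shows "Inf A + t * (Sup A - Inf A) \<in> A"
proof (cases "Inf A < Sup A")
  case True
  let ?z = "Inf A + t * (Sup A - Inf A)"
  have "Inf A < ?z" using True t by (simp add: algebra_simps)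
  then obtain p where p: "p \<in> A" "p < ?z" using ne bb by (meson cInf_less_iff)
  have "?z < Sup A" using True t
    by (smt (verit) mult_less_cancel_right2)
  then obtain q where q: "q \<in> A" "?z < q" using ne ba by (meson less_cSup_iff)
  show ?thesis using iv p q unfolding is_interval_1 by (meson less_le_not_le nle_le)
next
  case False
  obtain y where y: "y \<in> A" using ne by auto
  have "Inf A \<le> y" "y \<le> Sup A" using y ba bb by (auto intro: cInf_lower cSup_upper)
  then have "y = Inf A" "Sup A = Inf A" using False by linarith+
  then show ?thesis using y by simp
qed

lemma conv_measure_le:
  fixes A :: "real set"
  assumes ne: "A \<noteq> {}" and ba: "bdd_above A" and bb: "bdd_below A"
  shows "emeasure lborel A \<le> ennreal (Sup A - Inf A)"
proof -
  have "A \<subseteq> {Inf A..Sup A}" using ba bb by (auto intro: cInf_lower cSup_upper)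
  then have "emeasure lborel A \<le> emeasure lborel {Inf A..Sup A}"
    by (intro emeasure_mono) auto
  also have "\<dots> = ennreal (Sup A - Inf A)" using ne ba bb by (simp add: cInf_le_cSup)
  finally show ?thesis .
qed

lemma ennreal_big_top:
  fixes X :: ennreal
  assumes "\<And>M. M > 0 \<Longrightarrow> ennreal M \<le> X"
  shows "X = \<infinity>"
proof (rule ccontr)
  assume "X \<noteq> \<infinity>"
  then obtain c where c: "X = ennreal c" "0 \<le> c" by (cases X) auto
  have "ennreal (c + 1) \<le> X" using assms[of "c+1"] c by simp
  then show False using c by (simp add: ennreal_le_iff)
qed

lemma seg_subset:
  fixes a b p q y0 :: real
  assumes a: "0 < a" and pq: "\<forall>x. p \<le> x \<and> x \<le> q \<longrightarrow> x \<in> A"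
    and y0: "y0 \<in> B" and C: "\<forall>x\<in>A. \<forall>y\<in>B. a * x + b * y \<in> C"
  shows "{a * p + b * y0 .. a * q + b * y0} \<subseteq> C"
proof
  fix z assume z: "z \<in> {a * p + b * y0 .. a * q + b * y0}"
  let ?x = "(z - b * y0) / a"
  have "p \<le> ?x" "?x \<le> q" using z a by (auto simp: field_simps)
  then have "?x \<in> A" using pq by auto
  then have "a * ?x + b * y0 \<in> C" using C y0 by blast
  moreover have "a * ?x + b * y0 = z" using a by simp
  ultimately show "z \<in> C" by simp
qed

lemma unbounded_big:
  fixes A B C :: "real set" and a b :: real
  assumes iv: "is_interval A" and neA: "A \<noteq> {}" and neB: "B \<noteq> {}"
    and unb: "\<not> (bdd_above A \<and> bdd_below A)"
    and Cm: "C \<in> sets lborel" and C: "\<forall>x\<in>A. \<forall>y\<in>B. a * x + b * y \<in> C" and a: "0 < a"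
  shows "emeasure lborel C = \<infinity>"
proof (rule ennreal_big_top)
  fix M :: real assume M: "M > 0"
  obtain y0 where y0: "y0 \<in> B" using neB by auto
  obtain p q where pq: "p \<in> A" "q \<in> A" "p + M / a \<le> q \<or> q + M / a \<le> p"
  proof (cases "bdd_above A")
    case True
    then have nb: "\<not> bdd_below A" using unb by auto
    obtain q where q: "q \<in> A" using neA by auto
    obtain p where "p \<in> A" "p < q - M / a" using nb unfolding bdd_below_def
      by (meson not_le_imp_less)
    then show ?thesis using that q by force
  next
    case False
    obtain p where p: "p \<in> A" using neA by auto
    obtain q where "q \<in> A" "q > p + M / a" using False unfolding bdd_above_def
      by (meson not_le_imp_less)
    then show ?thesis using that p by force
  qed
  define l where "l = min p q"
  define u where "u = max p q"
  have lu: "l \<in> A" "u \<in> A" "l + M / a \<le> u" using pq by (auto simp: l_def u_def min_def max_def)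
  have seg: "\<forall>x. l \<le> x \<and> x \<le> u \<longrightarrow> x \<in> A" using iv lu unfolding is_interval_1 by blast
  have "{a * l + b * y0 .. a * u + b * y0} \<subseteq> C" by (rule seg_subset[OF a seg y0 C])
  then have "emeasure lborel {a * l + b * y0 .. a * u + b * y0} \<le> emeasure lborel C"
    using Cm by (intro emeasure_mono) auto
  moreover have "a * l + M \<le> a * u" using lu a by (simp add: field_simps)
  then have "ennreal M \<le> emeasure lborel {a * l + b * y0 .. a * u + b * y0}"
    using M by (subst emeasure_lborel_Icc) (auto intro!: ennreal_leI)
  ultimately show "ennreal M \<le> emeasure lborel C" by order
qed

lemma BM1:
  fixes A B C :: "real set" and a :: real
  assumes ivA: "is_interval A" and ivB: "is_interval B" and neA: "A \<noteq> {}" and neB: "B \<noteq> {}"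
    and Cm: "C \<in> sets lborel" and C: "\<forall>x\<in>A. \<forall>y\<in>B. a * x + (1 - a) * y \<in> C"
    and a: "0 < a" "a < 1"
  shows "ennreal a * emeasure lborel A + ennreal (1 - a) * emeasure lborel B \<le> emeasure lborel C"
proof (cases "bdd_above A \<and> bdd_below A \<and> bdd_above B \<and> bdd_below B")
  case False
  then consider "\<not> (bdd_above A \<and> bdd_below A)" | "\<not> (bdd_above B \<and> bdd_below B)" by auto
  then have "emeasure lborel C = \<infinity>"
  proof cases
    case 1 then show ?thesis using unbounded_big[OF ivA neA neB 1 Cm C] a by simp
  next
    case 2
    have C': "\<forall>y\<in>B. \<forall>x\<in>A. (1 - a) * y + a * x \<in> C" using C by (simp add: add.commute)
    show ?thesis using unbounded_big[OF ivB neB neA 2 Cm C'] a by simp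
  qed
  then show ?thesis by simp
next
  case True
  let ?lA = "Inf A" and ?uA = "Sup A" and ?lB = "Inf B" and ?uB = "Sup B"
  have lA: "?lA \<le> ?uA" "?lB \<le> ?uB" using True neA neB
    by (meson all_not_in_conv cInf_lower cSup_upper order.trans)+
  let ?L = "a * (?uA - ?lA) + (1 - a) * (?uB - ?lB)"
  have sub: "{a * ?lA + (1 - a) * ?lB <..< a * ?uA + (1 - a) * ?uB} \<subseteq> C"
  proof
    fix z assume z: "z \<in> {a * ?lA + (1 - a) * ?lB <..< a * ?uA + (1 - a) * ?uB}"
    have Lpos: "?L > 0" using z by (auto simp: algebra_simps)
    define t where "t = (z - (a * ?lA + (1 - a) * ?lB)) / ?L"
    have t: "0 < t" "t < 1" using z Lpos unfolding t_def by (auto simp: field_simps)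
    have x: "?lA + t * (?uA - ?lA) \<in> A" using conv_mid[OF ivA neA _ _ t] True by auto
    have y: "?lB + t * (?uB - ?lB) \<in> B" using conv_mid[OF ivB neB _ _ t] True by auto
    have "a * (?lA + t * (?uA - ?lA)) + (1 - a) * (?lB + t * (?uB - ?lB))
       = a * ?lA + (1 - a) * ?lB + t * ?L" by (simp add: algebra_simps)
    also have "\<dots> = z" using Lpos unfolding t_def by simp
    finally show "z \<in> C" using C x y by metis
  qed
  have "ennreal a * emeasure lborel A + ennreal (1 - a) * emeasure lborel B
     \<le> ennreal a * ennreal (?uA - ?lA) + ennreal (1 - a) * ennreal (?uB - ?lB)"
    using conv_measure_le[OF neA] conv_measure_le[OF neB] True
    by (intro add_mono mult_left_mono) auto
  also have "\<dots> = ennreal ?L" using a lA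
    by (simp add: ennreal_mult[symmetric] ennreal_plus[symmetric] del: ennreal_plus)
  also have "\<dots> = emeasure lborel {a * ?lA + (1 - a) * ?lB <..< a * ?uA + (1 - a) * ?uB}"
  proof -
    have "a * ?lA + (1 - a) * ?lB \<le> a * ?uA + (1 - a) * ?uB" using a lA
      by (intro add_mono mult_left_mono) auto
    then show ?thesis by (simp add: emeasure_lborel_Ioo algebra_simps)
  qed
  also have "\<dots> \<le> emeasure lborel C" using sub Cm by (intro emeasure_mono) auto
  finally show ?thesis .
qed

lemma layer_cake:
  fixes f :: "real \<Rightarrow> real" and c :: real
  assumes fm[measurable]: "f \<in> borel_measurable borel" and f0: "\<And>y. 0 \<le> f y" and c: "0 < c"
  shows "(\<integral>\<^sup>+y. ennreal (f y) \<partial>lborel)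
       = ennreal c * (\<integral>\<^sup>+s. indicator {0..} s * emeasure lborel {y. s * c < f y} \<partial>lborel)"
proof -
  have pt: "ennreal (f y) = ennreal c * (\<integral>\<^sup>+s. indicator {0..} s * indicator {y. s * c < f y} y \<partial>lborel)" for y
  proof -
    have "(\<lambda>s. indicator {0..} s * indicator {y. s * c < f y} y :: ennreal) = indicator {0..<f y / c}"
      using c by (auto simp: indicator_def field_simps fun_eq_iff)
    then have "(\<integral>\<^sup>+s. indicator {0..} s * indicator {y. s * c < f y} y \<partial>lborel) = ennreal (f y / c)"
      using f0[of y] c by simp
    moreover have "ennreal (f y) = ennreal c * ennreal (f y / c)"
      using c f0[of y] by (subst ennreal_mult[symmetric]) auto
    ultimately show ?thesis by simp
  qed
  have "(\<integral>\<^sup>+y. ennreal (f y) \<partial>lborel)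
      = (\<integral>\<^sup>+y. ennreal c * (\<integral>\<^sup>+s. indicator {0..} s * indicator {y. s * c < f y} y \<partial>lborel) \<partial>lborel)"
    by (subst pt) simp
  also have "\<dots> = ennreal c * (\<integral>\<^sup>+y. (\<integral>\<^sup>+s. indicator {0..} s * indicator {y. s * c < f y} y \<partial>lborel) \<partial>lborel)"
    by (rule nn_integral_cmult) measurable
  also have "(\<integral>\<^sup>+y. (\<integral>\<^sup>+s. indicator {0..} s * indicator {y. s * c < f y} y \<partial>lborel) \<partial>lborel)
      = (\<integral>\<^sup>+s. (\<integral>\<^sup>+y. indicator {0..} s * indicator {y. s * c < f y} y \<partial>lborel) \<partial>lborel)"
    by (rule lborel_pair.Fubini') measurable
  also have "\<dots> = (\<integral>\<^sup>+s. indicator {0..} s * emeasure lborel {y. s * c < f y} \<partial>lborel)"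
    by (intro nn_integral_cong) (simp add: nn_integral_cmult)
  finally show ?thesis .
qed

lemma meas_levelset[measurable]:
  fixes f :: "real \<Rightarrow> real"
  assumes [measurable]: "f \<in> borel_measurable borel"
  shows "(\<lambda>s. emeasure lborel {y. s * c < f y}) \<in> borel_measurable borel"
proof -
  have "(\<lambda>s. emeasure lborel {y. s * c < f y}) \<in> borel_measurable lborel"
  proof (rule lborel.measurable_emeasure)
    show "{x \<in> space (lborel \<Otimes>\<^sub>M lborel). snd x \<in> {y. fst x * c < f y}} \<in> sets (lborel \<Otimes>\<^sub>M lborel)"
      by measurable
  qed auto
  then show ?thesis by simp
qed

lemma levelset_layer:
  fixes f :: "real \<Rightarrow> real"
  assumes fm[measurable]: "f \<in> borel_measurable borel" and f0: "\<And>y. 0 \<le> f y" and Mf: "0 < Mf"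
    and fle: "\<And>y. f y \<le> Mf"
  shows "(\<integral>\<^sup>+y. ennreal (f y) \<partial>lborel)
       = ennreal Mf * (\<integral>\<^sup>+s. indicator {0<..<1} s * emeasure lborel {y. s * Mf < f y} \<partial>lborel)"
proof -
  have "(\<integral>\<^sup>+s. indicator {0..} s * emeasure lborel {y. s * Mf < f y} \<partial>lborel)
      = (\<integral>\<^sup>+s. indicator {0<..<1} s * emeasure lborel {y. s * Mf < f y} \<partial>lborel)"
  proof (intro nn_integral_cong_AE)
    show "AE s in lborel. indicator {0..} s * emeasure lborel {y. s * Mf < f y}
        = indicator {0<..<1} s * emeasure lborel {y. s * Mf < f y}"
      using AE_lborel_singleton[of 0]
    proof eventually_elim
      case (elim s)
      show ?case
      proof (cases "1 \<le> s")
        case True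
        have "{y. s * Mf < f y} = {}" using True Mf fle
          by (auto simp: not_less intro: order.trans[OF fle] )
        then show ?thesis by simp
      next
        case False
        then show ?thesis using elim by (auto simp: indicator_def)
      qed
    qed
  qed
  then show ?thesis using layer_cake[OF fm f0 Mf] by simp
qed

lemma PL1:
  fixes f g h :: "real \<Rightarrow> real" and a :: real
  assumes a: "0 < a" "a < 1"
    and fm[measurable]: "f \<in> borel_measurable borel" and gm[measurable]: "g \<in> borel_measurable borel"
    and hm[measurable]: "h \<in> borel_measurable borel"
    and f0: "\<And>y. 0 \<le> f y" and g0: "\<And>y. 0 \<le> g y" and h0: "\<And>y. 0 \<le> h y"
    and fi: "integrable lborel f" and gi: "integrable lborel g" and hi: "integrable lborel h"
    and fb: "\<exists>M. \<forall>y. f y \<le> M" and gb: "\<exists>M. \<forall>y. g y \<le> M"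
    and fq: "\<And>r. is_interval {y. r < f y}" and gq: "\<And>r. is_interval {y. r < g y}"
    and hyp: "\<And>y1 y2. f y1 powr a * g y2 powr (1 - a) \<le> h (a * y1 + (1 - a) * y2)"
  shows "(\<integral>y. f y \<partial>lborel) powr a * (\<integral>y. g y \<partial>lborel) powr (1 - a) \<le> (\<integral>y. h y \<partial>lborel)"
proof -
  define X where "X = (\<integral>y. f y \<partial>lborel)"
  define Y where "Y = (\<integral>y. g y \<partial>lborel)"
  have X0: "0 \<le> X" "0 \<le> Y" unfolding X_def Y_def using f0 g0 by (auto intro: integral_nonneg_AE)
  have H0: "0 \<le> (\<integral>y. h y \<partial>lborel)" using h0 by (auto intro: integral_nonneg_AE)
  show ?thesis
  proof (cases "X = 0 \<or> Y = 0")
    case True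
    then show ?thesis using H0 unfolding X_def Y_def by auto
  next
    case False
    then have Xp: "0 < X" "0 < Y" using X0 by auto
    define Mf where "Mf = Sup (range f)"
    define Mg where "Mg = Sup (range g)"
    have bf: "bdd_above (range f)" "bdd_above (range g)" using fb gb by (auto simp: bdd_above_def)
    have fle: "f y \<le> Mf" "g y \<le> Mg" for y unfolding Mf_def Mg_def using bf by (auto intro: cSup_upper)
    have Mfp: "0 < Mf"
    proof (rule ccontr)
      assume "\<not> 0 < Mf"
      then have "\<And>y. f y = 0" using fle f0 by (meson antisym not_le order.trans)
      then have "f = (\<lambda>_. 0)" by auto
      then have "X = 0" unfolding X_def by simp
      then show False using Xp by simp
    qed
    have Mgp: "0 < Mg"
    proof (rule ccontr)
      assume "\<not> 0 < Mg"
      then have "\<And>y. g y = 0" using fle g0 by (meson antisym not_le order.trans)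
      then have "g = (\<lambda>_. 0)" by auto
      then have "Y = 0" unfolding Y_def by simp
      then show False using Xp by simp
    qed
    define K where "K = Mf powr a * Mg powr (1 - a)"
    have Kp: "0 < K" unfolding K_def using Mfp Mgp by simp
    have neF: "{y. s * Mf < f y} \<noteq> {}" if s: "0 < s" "s < 1" for s
    proof -
      have "s * Mf < Mf" using s Mfp by simp
      then obtain z where "z \<in> range f" "s * Mf < z" using bf less_cSup_iff[of "range f" "s * Mf"] unfolding Mf_def
        by auto
      then show ?thesis by auto
    qed
    have neG: "{y. s * Mg < g y} \<noteq> {}" if s: "0 < s" "s < 1" for s
    proof -
      have "s * Mg < Mg" using s Mgp by simp
      then obtain z where "z \<in> range g" "s * Mg < z" using bf less_cSup_iff[of "range g" "s * Mg"] unfolding Mg_def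
        by auto
      then show ?thesis by auto
    qed
    have BM: "ennreal a * emeasure lborel {y. s * Mf < f y} + ennreal (1 - a) * emeasure lborel {y. s * Mg < g y}
        \<le> emeasure lborel {y. s * K < h y}" if s: "0 < s" "s < 1" for s
    proof (rule BM1[OF fq gq neF[OF s] neG[OF s] _ _ a])
      show "{y. s * K < h y} \<in> sets lborel" by measurable
      show "\<forall>x\<in>{y. s * Mf < f y}. \<forall>y\<in>{y. s * Mg < g y}. a * x + (1 - a) * y \<in> {y. s * K < h y}"
      proof (intro ballI)
        fix y1 y2 assume y1: "y1 \<in> {y. s * Mf < f y}" and y2: "y2 \<in> {y. s * Mg < g y}"
        have "(s * Mf) powr a < f y1 powr a" using y1 s Mfp a by (intro powr_less_mono2) auto
        moreover have "(s * Mg) powr (1 - a) < g y2 powr (1 - a)" using y2 s Mgp a by (intro powr_less_mono2) auto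
        ultimately have "(s * Mf) powr a * (s * Mg) powr (1 - a) < f y1 powr a * g y2 powr (1 - a)"
          using s Mfp Mgp by (intro mult_strict_mono) auto
        also have "(s * Mf) powr a * (s * Mg) powr (1 - a) = s * K"
        proof -
          have "(s * Mf) powr a * (s * Mg) powr (1 - a) = (s powr a * s powr (1 - a)) * K"
            using s Mfp Mgp unfolding K_def by (simp add: powr_mult)
          also have "s powr a * s powr (1 - a) = s" using s by (simp add: powr_add[symmetric])
          finally show ?thesis .
        qed
        finally show "a * y1 + (1 - a) * y2 \<in> {y. s * K < h y}" using hyp[of y1 y2] by simp
      qed
    qed
    have IF: "ennreal X = ennreal Mf * (\<integral>\<^sup>+s. indicator {0<..<1} s * emeasure lborel {y. s * Mf < f y} \<partial>lborel)"
      using levelset_layer[OF fm f0 Mfp fle(1)] fi f0 unfolding X_def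
      by (simp add: nn_integral_eq_integral)
    have IG: "ennreal Y = ennreal Mg * (\<integral>\<^sup>+s. indicator {0<..<1} s * emeasure lborel {y. s * Mg < g y} \<partial>lborel)"
      using levelset_layer[OF gm g0 Mgp fle(2)] gi g0 unfolding Y_def
      by (simp add: nn_integral_eq_integral)
    define IFs where "IFs = (\<integral>\<^sup>+s. indicator {0<..<1} s * emeasure lborel {y. s * Mf < f y} \<partial>lborel)"
    define IGs where "IGs = (\<integral>\<^sup>+s. indicator {0<..<1} s * emeasure lborel {y. s * Mg < g y} \<partial>lborel)"
    have IFs: "IFs = ennreal (X / Mf)"
    proof -
      have "ennreal X = ennreal Mf * IFs" using IF unfolding IFs_def .
      moreover have "ennreal (X / Mf) = ennreal (1 / Mf) * ennreal X"
        using Mfp Xp by (subst ennreal_mult[symmetric]) auto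
      ultimately have "ennreal (X / Mf) = ennreal (1 / Mf) * (ennreal Mf * IFs)" by simp
      also have "\<dots> = IFs" using Mfp
        by (subst mult.assoc[symmetric], subst ennreal_mult[symmetric]) auto
      finally show ?thesis by simp
    qed
    have IGs: "IGs = ennreal (Y / Mg)"
    proof -
      have "ennreal Y = ennreal Mg * IGs" using IG unfolding IGs_def .
      moreover have "ennreal (Y / Mg) = ennreal (1 / Mg) * ennreal Y"
        using Mgp Xp by (subst ennreal_mult[symmetric]) auto
      ultimately have "ennreal (Y / Mg) = ennreal (1 / Mg) * (ennreal Mg * IGs)" by simp
      also have "\<dots> = IGs" using Mgp
        by (subst mult.assoc[symmetric], subst ennreal_mult[symmetric]) auto
      finally show ?thesis by simp
    qed
    have "ennreal (K * (a * (X / Mf) + (1 - a) * (Y / Mg)))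
        = ennreal K * (ennreal a * IFs + ennreal (1 - a) * IGs)"
      using Kp a Xp Mfp Mgp IFs IGs
      by (simp add: ennreal_mult[symmetric] ennreal_plus[symmetric] del: ennreal_plus)
    also have "ennreal a * IFs + ennreal (1 - a) * IGs
        = (\<integral>\<^sup>+s. indicator {0<..<1} s * (ennreal a * emeasure lborel {y. s * Mf < f y}
              + ennreal (1 - a) * emeasure lborel {y. s * Mg < g y}) \<partial>lborel)"
    proof -
      have "(\<integral>\<^sup>+s. indicator {0<..<1} s * (ennreal a * emeasure lborel {y. s * Mf < f y}
              + ennreal (1 - a) * emeasure lborel {y. s * Mg < g y}) \<partial>lborel)
          = (\<integral>\<^sup>+s. ennreal a * (indicator {0<..<1} s * emeasure lborel {y. s * Mf < f y})
              + ennreal (1 - a) * (indicator {0<..<1} s * emeasure lborel {y. s * Mg < g y}) \<partial>lborel)"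
        by (intro nn_integral_cong) (simp add: algebra_simps)
      also have "\<dots> = (\<integral>\<^sup>+s. ennreal a * (indicator {0<..<1} s * emeasure lborel {y. s * Mf < f y}) \<partial>lborel)
          + (\<integral>\<^sup>+s. ennreal (1 - a) * (indicator {0<..<1} s * emeasure lborel {y. s * Mg < g y}) \<partial>lborel)"
        by (rule nn_integral_add) measurable
      also have "\<dots> = ennreal a * IFs + ennreal (1 - a) * IGs"
        unfolding IFs_def IGs_def
        by (simp add: nn_integral_cmult)
      finally show ?thesis by simp
    qed
    also have "\<dots> \<le> (\<integral>\<^sup>+s. indicator {0..} s * emeasure lborel {y. s * K < h y} \<partial>lborel)"
      by (intro nn_integral_mono) (auto simp: indicator_def BM)
    also have "ennreal K * \<dots> = (\<integral>\<^sup>+y. ennreal (h y) \<partial>lborel)"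
      using layer_cake[OF hm h0 Kp] by simp
    also have "\<dots> = ennreal (\<integral>y. h y \<partial>lborel)" using hi h0 by (simp add: nn_integral_eq_integral)
    finally have main: "K * (a * (X / Mf) + (1 - a) * (Y / Mg)) \<le> (\<integral>y. h y \<partial>lborel)"
      using Kp a by (simp add: mult_left_mono ennreal_le_iff H0 del: ennreal_plus)
    have "(X / Mf) powr a * (Y / Mg) powr (1 - a) \<le> a * (X / Mf) + (1 - a) * (Y / Mg)"
      using Xp Mfp Mgp a by (intro Youngs_inequality_0) auto
    then have "K * ((X / Mf) powr a * (Y / Mg) powr (1 - a)) \<le> K * (a * (X / Mf) + (1 - a) * (Y / Mg))"
      using Kp by simp
    moreover have "K * ((X / Mf) powr a * (Y / Mg) powr (1 - a)) = X powr a * Y powr (1 - a)"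
      unfolding K_def using Xp Mfp Mgp by (simp add: powr_divide)
    ultimately show ?thesis using main unfolding X_def Y_def by simp
  qed
qed

definition LCH :: "(field \<Rightarrow> field \<Rightarrow> real) \<Rightarrow> bool" where
  "LCH H \<longleftrightarrow> (\<forall>\<phi> \<psi> \<zeta> \<xi> a. 0 < a \<and> a < 1 \<longrightarrow>
      H \<phi> \<zeta> powr a * H \<psi> \<xi> powr (1 - a) \<le> H (\<lambda>x. a * \<phi> x + (1 - a) * \<psi> x) (\<lambda>x. a * \<zeta> x + (1 - a) * \<xi> x))"

definition DepI :: "site set \<Rightarrow> (field \<Rightarrow> field \<Rightarrow> real) \<Rightarrow> bool" where
  "DepI I H \<longleftrightarrow> (\<forall>\<phi> \<zeta> \<xi>. (\<forall>x\<in>I. \<zeta> x = \<xi> x) \<longrightarrow> H \<phi> \<zeta> = H \<phi> \<xi>)"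

lemma integrable_H:
  fixes I :: "site set" and g :: "real \<Rightarrow> real"
  assumes I: "finite I" and H0: "\<And>\<zeta>. 0 \<le> F \<zeta>" and Hm: "F \<in> borel_measurable (PiM I (\<lambda>_. lborel))"
    and Hb: "\<And>\<zeta>. F \<zeta> \<le> B * (\<Prod>x\<in>I. g (\<zeta> x))"
    and gi: "integrable lborel g" and g0: "\<And>y. 0 \<le> g y"
  shows "integrable (PiM I (\<lambda>_. lborel)) F"
proof -
  interpret product_sigma_finite "\<lambda>_::site. lborel" by standard
  have "integrable (PiM I (\<lambda>_. lborel)) (\<lambda>\<zeta>. (\<Prod>x\<in>I. g (\<zeta> x)))"
    using I gi by (intro product_integrable_prod) auto
  then have i2: "integrable (PiM I (\<lambda>_. lborel)) (\<lambda>\<zeta>. B * (\<Prod>x\<in>I. g (\<zeta> x)))" by simp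
  show ?thesis
  proof (rule Bochner_Integration.integrable_bound[OF i2 Hm], intro AE_I2)
    fix \<zeta>
    have "0 \<le> F \<zeta>" by (rule H0)
    then show "norm (F \<zeta>) \<le> norm (B * (\<Prod>x\<in>I. g (\<zeta> x)))" using Hb[of \<zeta>] by simp
  qed
qed

lemma qc_from_LCH:
  assumes L: "LCH H" and H0: "\<And>\<phi> \<zeta>. 0 \<le> H \<phi> \<zeta>"
  shows "is_interval {y. r < H \<phi> (\<zeta>(i := y))}"
  unfolding is_interval_1
proof (intro ballI allI impI)
  fix p q x assume p: "p \<in> {y. r < H \<phi> (\<zeta>(i := y))}" and q: "q \<in> {y. r < H \<phi> (\<zeta>(i := y))}"
    and x: "p \<le> x \<and> x \<le> q"
  show "x \<in> {y. r < H \<phi> (\<zeta>(i := y))}"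
  proof (cases "x = p \<or> x = q")
    case True then show ?thesis using p q by auto
  next
    case False
    then have pq: "p < x" "x < q" using x by auto
    define t where "t = (q - x) / (q - p)"
    have t: "0 < t" "t < 1" using pq unfolding t_def by (auto simp: field_simps)
    have tq: "t * (q - p) = q - x" using pq unfolding t_def by simp
    have xt: "x = t * p + (1 - t) * q" using tq by (simp add: algebra_simps)
    have e1: "(\<lambda>x. t * \<phi> x + (1 - t) * \<phi> x) = \<phi>" by (simp add: algebra_simps)
    have e2: "(\<lambda>y. t * (\<zeta>(i := p)) y + (1 - t) * (\<zeta>(i := q)) y) = \<zeta>(i := x)"
      using xt by (auto simp: fun_eq_iff algebra_simps)
    have main: "H \<phi> (\<zeta>(i := p)) powr t * H \<phi> (\<zeta>(i := q)) powr (1 - t) \<le> H \<phi> (\<zeta>(i := x))"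
    proof -
      have "H \<phi> (\<zeta>(i := p)) powr t * H \<phi> (\<zeta>(i := q)) powr (1 - t)
          \<le> H (\<lambda>x. t * \<phi> x + (1 - t) * \<phi> x) (\<lambda>y. t * (\<zeta>(i := p)) y + (1 - t) * (\<zeta>(i := q)) y)"
        using L t unfolding LCH_def by blast
      then show ?thesis unfolding e1 e2 .
    qed
    show ?thesis
    proof (cases "r < 0")
      case True then show ?thesis using H0 by (simp add: less_le_trans[OF True])
    next
      case False
      define m where "m = min (H \<phi> (\<zeta>(i := p))) (H \<phi> (\<zeta>(i := q)))"
      have m: "r < m" using p q unfolding m_def by auto
      then have mp: "0 < m" using False by linarith
      have "m = m powr t * m powr (1 - t)" using mp by (simp add: powr_add[symmetric])
      also have "\<dots> \<le> H \<phi> (\<zeta>(i := p)) powr t * H \<phi> (\<zeta>(i := q)) powr (1 - t)"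
        using mp t unfolding m_def by (intro mult_mono powr_mono2) auto
      finally show ?thesis using main m by simp
    qed
  qed
qed

lemma marg:
  fixes I :: "site set" and g :: "real \<Rightarrow> real" and G0 B :: real and H :: "field \<Rightarrow> field \<Rightarrow> real"
  assumes gi: "integrable lborel g" and g0: "\<And>y. 0 \<le> g y" and gb: "\<And>y. g y \<le> G0"
    and a: "0 < a" "a < 1"
  shows "finite I \<Longrightarrow> (\<forall>\<phi> \<zeta>. 0 \<le> H \<phi> \<zeta>) \<Longrightarrow> (\<forall>\<phi>. H \<phi> \<in> borel_measurable (PiM I (\<lambda>_. lborel)))
    \<Longrightarrow> (\<forall>\<phi> \<zeta>. H \<phi> \<zeta> \<le> B * (\<Prod>x\<in>I. g (\<zeta> x))) \<Longrightarrow> DepI I H \<Longrightarrow> LCH H \<Longrightarrow>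
    (\<integral>\<zeta>. H \<phi> \<zeta> \<partial>PiM I (\<lambda>_. lborel)) powr a * (\<integral>\<zeta>. H \<psi> \<zeta> \<partial>PiM I (\<lambda>_. lborel)) powr (1 - a)
      \<le> (\<integral>\<zeta>. H (\<lambda>x. a * \<phi> x + (1 - a) * \<psi> x) \<zeta> \<partial>PiM I (\<lambda>_. lborel))"
proof (induction I arbitrary: H B \<phi> \<psi> rule: finite_induct)
  case empty
  let ?U = "(\<lambda>_. undefined) :: field"
  have "H \<phi> ?U powr a * H \<psi> ?U powr (1 - a)
      \<le> H (\<lambda>x. a * \<phi> x + (1 - a) * \<psi> x) (\<lambda>x. a * ?U x + (1 - a) * ?U x)"
    using empty.prems(5) a unfolding LCH_def by blast
  also have "\<dots> = H (\<lambda>x. a * \<phi> x + (1 - a) * \<psi> x) ?U"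
    using empty.prems(4) unfolding DepI_def by blast
  finally show ?case by (simp add: PiM_empty lebesgue_integral_count_space_finite)
next
  case (insert i I)
  interpret product_sigma_finite "\<lambda>_::site. lborel" by standard
  note H0 = insert.prems(1) and Hm = insert.prems(2) and Hb = insert.prems(3)
    and HD = insert.prems(4) and HL = insert.prems(5)
  have gm[measurable]: "g \<in> borel_measurable borel" using gi by auto
  let ?P = "\<lambda>\<zeta>::field. \<Prod>x\<in>I. g (\<zeta> x)"
  have P0: "0 \<le> ?P \<zeta>" for \<zeta> using g0 by (simp add: prod_nonneg)
  have upd_res: "H \<phi> (\<zeta>(i := y)) = H \<phi> ((restrict \<zeta> I)(i := y))" for \<phi> \<zeta> y
  proof -
    have "\<forall>x\<in>insert i I. (\<zeta>(i := y)) x = ((restrict \<zeta> I)(i := y)) x" by auto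
    then show ?thesis using HD unfolding DepI_def by blast
  qed
  have fm: "(\<lambda>y. H \<phi> (\<zeta>(i := y))) \<in> borel_measurable borel" for \<phi> \<zeta>
  proof -
    have r: "restrict \<zeta> I \<in> space (PiM I (\<lambda>_. lborel))" by (simp add: space_PiM)
    have "(\<lambda>y. H \<phi> ((restrict \<zeta> I)(i := y))) \<in> borel_measurable lborel"
      using measurable_compose[OF measurable_component_update[OF r insert.hyps(2)] Hm[rule_format, of \<phi>]]
      by simp
    moreover have "(\<lambda>y. H \<phi> (\<zeta>(i := y))) = (\<lambda>y. H \<phi> ((restrict \<zeta> I)(i := y)))"
      by (rule ext) (rule upd_res)
    ultimately show ?thesis by simp
  qed
  have fbound: "H \<phi> (\<zeta>(i := y)) \<le> B * ?P \<zeta> * g y" for \<phi> \<zeta> y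
  proof -
    have "(\<Prod>x\<in>insert i I. g ((\<zeta>(i := y)) x)) = g y * ?P \<zeta>"
    proof -
      have "(\<Prod>x\<in>I. g ((\<zeta>(i := y)) x)) = ?P \<zeta>"
        using insert.hyps(2) by (intro prod.cong) auto
      then show ?thesis using insert.hyps by (simp add: prod.insert)
    qed
    then show ?thesis using Hb[rule_format, of \<phi> "\<zeta>(i := y)"] by (simp add: algebra_simps)
  qed
  have fint: "integrable lborel (\<lambda>y. H \<phi> (\<zeta>(i := y)))" for \<phi> \<zeta>
  proof (rule Bochner_Integration.integrable_bound[of _ "\<lambda>y. B * ?P \<zeta> * g y"])
    show "integrable lborel (\<lambda>y. B * ?P \<zeta> * g y)" using gi by simp
    show "(\<lambda>y. H \<phi> (\<zeta>(i := y))) \<in> borel_measurable lborel" using fm[of \<phi> \<zeta>] by simp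
    show "AE y in lborel. norm (H \<phi> (\<zeta>(i := y))) \<le> norm (B * ?P \<zeta> * g y)"
    proof (intro AE_I2)
      fix y
      have "0 \<le> H \<phi> (\<zeta>(i := y))" using H0 by auto
      then show "norm (H \<phi> (\<zeta>(i := y))) \<le> norm (B * ?P \<zeta> * g y)" using fbound[of \<phi> \<zeta> y] by simp
    qed
  qed
  define H' where "H' = (\<lambda>\<phi> \<zeta>. \<integral>y. H \<phi> (\<zeta>(i := y)) \<partial>lborel)"
  have H'0: "\<forall>\<phi> \<zeta>. 0 \<le> H' \<phi> \<zeta>" unfolding H'_def using H0 by (auto intro: integral_nonneg_AE)
  have H'm: "\<forall>\<phi>. H' \<phi> \<in> borel_measurable (PiM I (\<lambda>_. lborel))"
  proof
    fix \<phi>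
    have "(\<lambda>(\<zeta>, y). H \<phi> (\<zeta>(i := y))) \<in> borel_measurable (PiM I (\<lambda>_. lborel) \<Otimes>\<^sub>M lborel)"
      using measurable_compose[OF measurable_add_dim[of i I "\<lambda>_. lborel"] Hm[rule_format, of \<phi>]]
      by (simp add: case_prod_beta')
    then show "H' \<phi> \<in> borel_measurable (PiM I (\<lambda>_. lborel))"
      unfolding H'_def by (rule lborel.borel_measurable_lebesgue_integral[of "\<lambda>\<zeta> y. H \<phi> (\<zeta>(i := y))", simplified])
  qed
  have H'b: "\<forall>\<phi> \<zeta>. H' \<phi> \<zeta> \<le> (B * (\<integral>y. g y \<partial>lborel)) * ?P \<zeta>"
  proof (intro allI)
    fix \<phi> \<zeta>
    have "H' \<phi> \<zeta> \<le> (\<integral>y. B * ?P \<zeta> * g y \<partial>lborel)"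
      unfolding H'_def using fint gi fbound by (intro integral_mono) auto
    also have "\<dots> = (B * (\<integral>y. g y \<partial>lborel)) * ?P \<zeta>" by simp
    finally show "H' \<phi> \<zeta> \<le> (B * (\<integral>y. g y \<partial>lborel)) * ?P \<zeta>" .
  qed
  have H'D: "DepI I H'"
    unfolding DepI_def H'_def
  proof (intro allI impI)
    fix \<phi> \<zeta> \<xi> :: field assume e: "\<forall>x\<in>I. \<zeta> x = \<xi> x"
    have "H \<phi> (\<zeta>(i := y)) = H \<phi> (\<xi>(i := y))" for y
    proof -
      have "\<forall>x\<in>insert i I. (\<zeta>(i := y)) x = (\<xi>(i := y)) x" using e by auto
      then show ?thesis using HD unfolding DepI_def by blast
    qed
    then show "(\<integral>y. H \<phi> (\<zeta>(i := y)) \<partial>lborel) = (\<integral>y. H \<phi> (\<xi>(i := y)) \<partial>lborel)" by simp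
  qed
  have H'L: "LCH H'"
    unfolding LCH_def
  proof (intro allI impI)
    fix \<phi> \<psi> \<zeta> \<xi> :: field and b :: real assume b: "0 < b \<and> b < 1"
    let ?m\<phi> = "\<lambda>x. b * \<phi> x + (1 - b) * \<psi> x" and ?m\<zeta> = "\<lambda>x. b * \<zeta> x + (1 - b) * \<xi> x"
    have "(\<integral>y. H \<phi> (\<zeta>(i := y)) \<partial>lborel) powr b * (\<integral>y. H \<psi> (\<xi>(i := y)) \<partial>lborel) powr (1 - b)
        \<le> (\<integral>y. H ?m\<phi> (?m\<zeta>(i := y)) \<partial>lborel)"
    proof (rule PL1)
      show "0 < b" "b < 1" using b by auto
      show "\<And>y. 0 \<le> H \<phi> (\<zeta>(i := y))" "\<And>y. 0 \<le> H \<psi> (\<xi>(i := y))" "\<And>y. 0 \<le> H ?m\<phi> (?m\<zeta>(i := y))"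
        using H0 by auto
      show "integrable lborel (\<lambda>y. H \<phi> (\<zeta>(i := y)))" "integrable lborel (\<lambda>y. H \<psi> (\<xi>(i := y)))"
        "integrable lborel (\<lambda>y. H ?m\<phi> (?m\<zeta>(i := y)))" by (rule fint)+
      show "(\<lambda>y. H \<phi> (\<zeta>(i := y))) \<in> borel_measurable borel" "(\<lambda>y. H \<psi> (\<xi>(i := y))) \<in> borel_measurable borel"
        "(\<lambda>y. H ?m\<phi> (?m\<zeta>(i := y))) \<in> borel_measurable borel" by (rule fm)+
      have bd: "\<exists>M. \<forall>y. H \<phi>' (\<zeta>'(i := y)) \<le> M" for \<phi>' \<zeta>'
      proof (intro exI allI)
        fix y
        have "H \<phi>' (\<zeta>'(i := y)) \<le> B * ?P \<zeta>' * g y" by (rule fbound)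
        also have "\<dots> \<le> \<bar>B\<bar> * ?P \<zeta>' * G0"
        proof -
          have "B * ?P \<zeta>' * g y \<le> \<bar>B\<bar> * ?P \<zeta>' * g y"
            using P0 g0 by (intro mult_right_mono) auto
          also have "\<dots> \<le> \<bar>B\<bar> * ?P \<zeta>' * G0" using P0 gb by (intro mult_left_mono) auto
          finally show ?thesis .
        qed
        finally show "H \<phi>' (\<zeta>'(i := y)) \<le> \<bar>B\<bar> * ?P \<zeta>' * G0" .
      qed
      show "\<exists>M. \<forall>y. H \<phi> (\<zeta>(i := y)) \<le> M" "\<exists>M. \<forall>y. H \<psi> (\<xi>(i := y)) \<le> M" by (rule bd)+
      show "\<And>r. is_interval {y. r < H \<phi> (\<zeta>(i := y))}" "\<And>r. is_interval {y. r < H \<psi> (\<xi>(i := y))}"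
        using H0 by (intro qc_from_LCH[OF HL]; auto)+
      show "H \<phi> (\<zeta>(i := y1)) powr b * H \<psi> (\<xi>(i := y2)) powr (1 - b) \<le> H ?m\<phi> (?m\<zeta>(i := b * y1 + (1 - b) * y2))"
        for y1 y2
      proof -
        have e: "(\<lambda>x. b * (\<zeta>(i := y1)) x + (1 - b) * (\<xi>(i := y2)) x) = ?m\<zeta>(i := b * y1 + (1 - b) * y2)"
          by (auto simp: fun_eq_iff)
        have "H \<phi> (\<zeta>(i := y1)) powr b * H \<psi> (\<xi>(i := y2)) powr (1 - b)
            \<le> H ?m\<phi> (\<lambda>x. b * (\<zeta>(i := y1)) x + (1 - b) * (\<xi>(i := y2)) x)"
          using HL b unfolding LCH_def by blast
        then show ?thesis unfolding e .
      qed
    qed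
    then show "H' \<phi> \<zeta> powr b * H' \<psi> \<xi> powr (1 - b) \<le> H' ?m\<phi> ?m\<zeta>" unfolding H'_def .
  qed
  have IH: "(\<integral>\<zeta>. H' \<phi> \<zeta> \<partial>PiM I (\<lambda>_. lborel)) powr a * (\<integral>\<zeta>. H' \<psi> \<zeta> \<partial>PiM I (\<lambda>_. lborel)) powr (1 - a)
      \<le> (\<integral>\<zeta>. H' (\<lambda>x. a * \<phi> x + (1 - a) * \<psi> x) \<zeta> \<partial>PiM I (\<lambda>_. lborel))"
    by (rule insert.IH[OF H'0 H'm H'b H'D H'L])
  have fub: "(\<integral>\<zeta>. H \<phi>' \<zeta> \<partial>PiM (insert i I) (\<lambda>_. lborel)) = (\<integral>\<zeta>. H' \<phi>' \<zeta> \<partial>PiM I (\<lambda>_. lborel))" for \<phi>'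
  proof -
    have "integrable (PiM (insert i I) (\<lambda>_. lborel)) (H \<phi>')"
      using insert.hyps gi g0 H0 Hm Hb by (intro integrable_H[where B=B and g=g]) auto
    then show ?thesis unfolding H'_def using insert.hyps by (simp add: product_integral_insert)
  qed
  show ?case unfolding fub using IH .
qed

lemma DERIV_int:
  fixes f f' :: "real \<Rightarrow> 'a \<Rightarrow> real" and w :: "'a \<Rightarrow> real"
  assumes fi: "\<And>s. integrable M (f s)" and f'm: "f' s0 \<in> borel_measurable M" and wi: "integrable M w"
    and der: "\<And>s x. x \<in> space M \<Longrightarrow> ((\<lambda>s. f s x) has_real_derivative f' s x) (at s)"
    and bd: "\<And>s x. x \<in> space M \<Longrightarrow> \<bar>f' s x\<bar> \<le> w x"
  shows "((\<lambda>s. \<integral>x. f s x \<partial>M) has_real_derivative (\<integral>x. f' s0 x \<partial>M)) (at s0)"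
  unfolding has_field_derivative_iff tendsto_at_iff_sequentially
proof (intro allI impI)
  fix X :: "nat \<Rightarrow> real" assume X: "\<forall>i. X i \<in> UNIV - {s0}" and Xl: "X \<longlonglongrightarrow> s0"
  define q where "q = (\<lambda>n x. (f (X n) x - f s0 x) / (X n - s0))"
  have eq: "((\<lambda>y. ((\<integral>x. f y x \<partial>M) - (\<integral>x. f s0 x \<partial>M)) / (y - s0)) \<circ> X) n = (\<integral>x. q n x \<partial>M)" for n
    unfolding q_def comp_def using fi by (simp add: integral_diff)
  have "(\<lambda>n. \<integral>x. q n x \<partial>M) \<longlonglongrightarrow> (\<integral>x. f' s0 x \<partial>M)"
  proof (rule integral_dominated_convergence[OF f'm _ wi])
    show "\<And>n. q n \<in> borel_measurable M" unfolding q_def using fi by auto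
    show "AE x in M. (\<lambda>n. q n x) \<longlonglongrightarrow> f' s0 x"
    proof (intro AE_I2)
      fix x assume x: "x \<in> space M"
      have "((\<lambda>y. (f y x - f s0 x) / (y - s0)) \<longlongrightarrow> f' s0 x) (at s0)"
        using der[OF x, of s0] unfolding has_field_derivative_iff .
      then show "(\<lambda>n. q n x) \<longlonglongrightarrow> f' s0 x"
        unfolding tendsto_at_iff_sequentially q_def using X Xl by (auto simp: comp_def)
    qed
    show "AE x in M. norm (q n x) \<le> w x" for n
    proof (intro AE_I2)
      fix x assume x: "x \<in> space M"
      have Xn: "X n \<noteq> s0" using X by auto
      obtain z where z: "f (X n) x - f s0 x = (X n - s0) * f' z x"
      proof (cases "X n < s0")
        case True
        from MVT2[OF True, of "\<lambda>s. f s x" "\<lambda>s. f' s x"] der[OF x]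
        obtain z where "f s0 x - f (X n) x = (s0 - X n) * f' z x" by blast
        then show ?thesis using that[of z] by (simp add: algebra_simps)
      next
        case False
        then have "s0 < X n" using Xn by auto
        from MVT2[OF this, of "\<lambda>s. f s x" "\<lambda>s. f' s x"] der[OF x]
        obtain z where "f (X n) x - f s0 x = (X n - s0) * f' z x" by blast
        then show ?thesis using that[of z] by simp
      qed
      have "q n x = f' z x" unfolding q_def using z Xn by simp
      then show "norm (q n x) \<le> w x" using bd[OF x] by simp
    qed
  qed
  then show "((\<lambda>y. ((\<integral>x. f y x \<partial>M) - (\<integral>x. f s0 x \<partial>M)) / (y - s0)) \<circ> X) \<longlonglongrightarrow> (\<integral>x. f' s0 x \<partial>M)"
    unfolding eq .
qed

lemma pos_int:
  fixes f :: "'a \<Rightarrow> real"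
  assumes fi: "integrable M f" and fp: "\<And>x. 0 < f x" and sp: "emeasure M (space M) \<noteq> 0"
  shows "0 < (\<integral>x. f x \<partial>M)"
proof -
  have "0 \<le> (\<integral>x. f x \<partial>M)" using fp by (auto intro: integral_nonneg_AE less_imp_le)
  moreover have "(\<integral>x. f x \<partial>M) \<noteq> 0"
  proof
    assume "(\<integral>x. f x \<partial>M) = 0"
    then have "AE x in M. f x = 0" using integral_nonneg_eq_0_iff_AE[OF fi] fp
      by (simp add: less_imp_le)
    then have "AE x in M. False"
    proof (rule AE_mp, intro AE_I2 impI)
      fix x assume "f x = 0" then show False using fp[of x] by simp
    qed
    then have "emeasure M (space M) = 0" by (simp add: AE_iff_measurable[OF _ refl])
    then show False using sp by simp
  qed
  ultimately show ?thesis by simp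
qed

lemma exp_convex_ineq:
  fixes a x y :: real
  assumes "0 < a" "a < 1"
  shows "exp (a * x + (1 - a) * y) \<le> a * exp x + (1 - a) * exp y"
proof -
  have "exp (a * x + (1 - a) * y) = exp x powr a * exp y powr (1 - a)"
    unfolding exp_powr_real exp_add[symmetric] by (simp add: algebra_simps)
  also have "\<dots> \<le> a * exp x + (1 - a) * exp y" using assms by (intro Youngs_inequality_0) auto
  finally show ?thesis .
qed

lemma gauss_integrable:
  fixes k :: real assumes k: "0 < k"
  shows "integrable lborel (\<lambda>y. exp (- k * y\<^sup>2))"
proof -
  define s where "s = sqrt (1 / (2 * k))"
  have s: "0 < s" "s\<^sup>2 = 1 / (2 * k)" unfolding s_def using k by auto
  have "(\<lambda>y. exp (- k * y\<^sup>2)) = (\<lambda>y. sqrt (2 * pi * s\<^sup>2) * normal_density 0 s y)"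
  proof
    fix y
    have "- (y - 0)\<^sup>2 / (2 * s\<^sup>2) = - k * y\<^sup>2" using s k by (simp add: field_simps)
    then show "exp (- k * y\<^sup>2) = sqrt (2 * pi * s\<^sup>2) * normal_density 0 s y"
      unfolding normal_density_def using s k by simp
  qed
  then show ?thesis using integrable_normal_density[OF s(1), of 0] by simp
qed

definition sh1 :: "nat \<Rightarrow> site \<Rightarrow> site" where "sh1 N x = ((fst x + 1) mod N, snd x)"
definition sh2 :: "nat \<Rightarrow> site \<Rightarrow> site" where "sh2 N x = ((fst x + N - 1) mod N, snd x)"
definition sh3 :: "nat \<Rightarrow> site \<Rightarrow> site" where "sh3 N x = (fst x, (snd x + 1) mod N)"
definition sh4 :: "nat \<Rightarrow> site \<Rightarrow> site" where "sh4 N x = (fst x, (snd x + N - 1) mod N)"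

lemma lap_eq: "lap N \<zeta> x = real N ^ 2 * ((\<zeta> (sh1 N x) - \<zeta> x) + (\<zeta> (sh2 N x) - \<zeta> x)
    + (\<zeta> (sh3 N x) - \<zeta> x) + (\<zeta> (sh4 N x) - \<zeta> x))"
  by (simp add: lap_def nbrs_def sh1_def sh2_def sh3_def sh4_def algebra_simps)

lemma mod_suc: "i < N \<Longrightarrow> Suc i mod N = (if Suc i = N then 0 else Suc i)"
proof (cases "Suc i = N")
  case True then show ?thesis by simp
next
  case False
  assume "i < N" then have "Suc i < N" using False by simp
  then show ?thesis by simp
qed

lemma mod_pred: "i < (N::nat) \<Longrightarrow> (i + N - 1) mod N = (if i = 0 then N - 1 else i - 1)"
proof (cases "i = 0")
  case True
  assume "i < N" then show ?thesis using True by simp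
next
  case False
  assume i: "i < N"
  then have "i + N - 1 = (i - 1) + N" using False by simp
  then have "(i + N - 1) mod N = (i - 1) mod N" by simp
  then show ?thesis using i False by simp
qed

lemma mod_pred': "i < (N::nat) \<Longrightarrow> (i + N - Suc 0) mod N = (if i = 0 then N - 1 else i - 1)"
  using mod_pred by simp

lemma sites_finite: "finite (sites N)" unfolding sites_def by simp

lemma sh_in:
  assumes "x \<in> sites N"
  shows "sh1 N x \<in> sites N" "sh2 N x \<in> sites N" "sh3 N x \<in> sites N" "sh4 N x \<in> sites N"
proof -
  have N: "0 < N" using assms unfolding sites_def by auto
  show "sh1 N x \<in> sites N" "sh2 N x \<in> sites N" "sh3 N x \<in> sites N" "sh4 N x \<in> sites N"
    using assms N unfolding sites_def sh1_def sh2_def sh3_def sh4_def by (auto simp: mem_Times_iff)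
qed

lemma bij_endo:
  assumes "finite S" "\<And>x. x \<in> S \<Longrightarrow> f x \<in> S" "inj_on f S"
  shows "bij_betw f S S"
  using assms endo_inj_surj[of S f] unfolding bij_betw_def by auto

lemma sh_bij: "bij_betw (sh1 N) (sites N) (sites N)" "bij_betw (sh2 N) (sites N) (sites N)"
    "bij_betw (sh3 N) (sites N) (sites N)" "bij_betw (sh4 N) (sites N) (sites N)"
proof -
  show "bij_betw (sh1 N) (sites N) (sites N)"
    by (intro bij_endo sites_finite sh_in) (auto simp: inj_on_def sites_def sh1_def mod_suc split: if_splits)
  show "bij_betw (sh2 N) (sites N) (sites N)"
    by (intro bij_endo sites_finite sh_in) (auto simp: inj_on_def sites_def sh2_def mod_pred' split: if_splits)
  show "bij_betw (sh3 N) (sites N) (sites N)"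
    by (intro bij_endo sites_finite sh_in) (auto simp: inj_on_def sites_def sh3_def mod_suc split: if_splits)
  show "bij_betw (sh4 N) (sites N) (sites N)"
    by (intro bij_endo sites_finite sh_in) (auto simp: inj_on_def sites_def sh4_def mod_pred' split: if_splits)
qed

lemma psd_one:
  fixes \<zeta> :: "site \<Rightarrow> real"
  assumes b: "bij_betw s S S"
  shows "0 \<le> (\<Sum>x\<in>S. \<zeta> x * (\<zeta> x - \<zeta> (s x)))"
proof -
  have "(\<Sum>x\<in>S. (\<zeta> x ^ 2 - \<zeta> (s x) ^ 2) / 2) \<le> (\<Sum>x\<in>S. \<zeta> x * (\<zeta> x - \<zeta> (s x)))"
  proof (rule sum_mono)
    fix x
    have f1: "0 \<le> (\<zeta> x - \<zeta> (s x))^2" by simp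
    have f2: "(\<zeta> x - \<zeta> (s x))^2 = \<zeta> x ^ 2 - 2 * (\<zeta> x * \<zeta> (s x)) + \<zeta> (s x) ^ 2"
      by (simp add: power2_diff)
    have f3: "\<zeta> x * (\<zeta> x - \<zeta> (s x)) = \<zeta> x ^ 2 - \<zeta> x * \<zeta> (s x)"
      by (simp add: power2_eq_square right_diff_distrib)
    show "(\<zeta> x ^ 2 - \<zeta> (s x) ^ 2) / 2 \<le> \<zeta> x * (\<zeta> x - \<zeta> (s x))"
      unfolding f3 using f1 unfolding f2 by simp
  qed
  moreover have "(\<Sum>x\<in>S. (\<zeta> x ^ 2 - \<zeta> (s x) ^ 2) / 2) = 0"
  proof -
    have "(\<Sum>x\<in>S. \<zeta> (s x) ^ 2) = (\<Sum>x\<in>S. \<zeta> x ^ 2)"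
      using sum.reindex_bij_betw[OF b, of "\<lambda>y. \<zeta> y ^ 2"] by simp
    then show ?thesis by (simp add: sum_divide_distrib[symmetric] sum_subtractf)
  qed
  ultimately show ?thesis by simp
qed

lemma psd_lap: "0 \<le> (\<Sum>x\<in>sites N. \<zeta> x * (- lap N \<zeta> x))"
proof -
  have "(\<Sum>x\<in>sites N. \<zeta> x * (- lap N \<zeta> x)) = real N ^ 2 *
     ((\<Sum>x\<in>sites N. \<zeta> x * (\<zeta> x - \<zeta> (sh1 N x))) + (\<Sum>x\<in>sites N. \<zeta> x * (\<zeta> x - \<zeta> (sh2 N x)))
      + (\<Sum>x\<in>sites N. \<zeta> x * (\<zeta> x - \<zeta> (sh3 N x))) + (\<Sum>x\<in>sites N. \<zeta> x * (\<zeta> x - \<zeta> (sh4 N x))))"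
    by (simp add: lap_eq sum.distrib[symmetric] sum_distrib_left algebra_simps)
  also have "\<dots> \<ge> 0" using psd_one[OF sh_bij(1)] psd_one[OF sh_bij(2)] psd_one[OF sh_bij(3)] psd_one[OF sh_bij(4)]
    by (intro mult_nonneg_nonneg) auto
  finally show ?thesis .
qed

lemma prec_lower:
  assumes t: "0 < t"
  shows "(1 / real N)^2 * (m^2 + 1/t) * (\<Sum>x\<in>sites N. (\<zeta> x)^2) \<le> prec_form N m t \<zeta>"
proof -
  have "prec_form N m t \<zeta> = (1 / real N)^2 * (\<Sum>x\<in>sites N. \<zeta> x * (- lap N \<zeta> x) + (m^2 + 1/t) * (\<zeta> x)^2)"
    unfolding prec_form_def lat_int_def
    by (rule arg_cong[where f="\<lambda>s. (1 / real N)^2 * s"], rule sum.cong) (auto simp: power2_eq_square algebra_simps)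
  also have "\<dots> = (1 / real N)^2 * ((\<Sum>x\<in>sites N. \<zeta> x * (- lap N \<zeta> x))
      + (m^2 + 1/t) * (\<Sum>x\<in>sites N. (\<zeta> x)^2))"
    by (simp only: sum.distrib sum_distrib_left[symmetric])
  finally have "prec_form N m t \<zeta> = (1 / real N)^2 * ((\<Sum>x\<in>sites N. \<zeta> x * (- lap N \<zeta> x))
      + (m^2 + 1/t) * (\<Sum>x\<in>sites N. (\<zeta> x)^2))" .
  moreover have "0 \<le> (1 / real N)^2" by simp
  ultimately show ?thesis using psd_lap[where N=N and \<zeta>=\<zeta>]
    by (simp add: algebra_simps mult_left_mono)
qed

lemma lap_lin: "lap N (\<lambda>x. a * \<zeta> x + b * \<xi> x) y = a * lap N \<zeta> y + b * lap N \<xi> y"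
  by (simp add: lap_eq algebra_simps)

lemma lap_diff: "lap N (\<lambda>x. \<zeta> x - \<xi> x) y = lap N \<zeta> y - lap N \<xi> y"
  by (simp add: lap_eq algebra_simps)

lemma prec_convex:
  assumes t: "0 < t" and a: "0 < a" "a < 1"
  shows "prec_form N m t (\<lambda>x. a * \<zeta> x + (1 - a) * \<xi> x) \<le> a * prec_form N m t \<zeta> + (1 - a) * prec_form N m t \<xi>"
proof -
  define \<mu> where "\<mu> = m^2 + 1/t"
  define c where "c = (1 / real N)^2"
  define L where "L = (\<lambda>\<zeta> x. - lap N \<zeta> x + \<mu> * \<zeta> x)"
  have P: "prec_form N m t \<eta> = c * (\<Sum>x\<in>sites N. \<eta> x * L \<eta> x)" for \<eta>
    unfolding prec_form_def lat_int_def c_def L_def \<mu>_def by simp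
  have pt: "a * (\<zeta> x * L \<zeta> x) + (1 - a) * (\<xi> x * L \<xi> x)
      - (a * \<zeta> x + (1 - a) * \<xi> x) * L (\<lambda>x. a * \<zeta> x + (1 - a) * \<xi> x) x
      = a * (1 - a) * ((\<zeta> x - \<xi> x) * L (\<lambda>x. \<zeta> x - \<xi> x) x)" for x
    unfolding L_def lap_lin lap_diff by (simp add: algebra_simps)
  have "a * prec_form N m t \<zeta> + (1 - a) * prec_form N m t \<xi> - prec_form N m t (\<lambda>x. a * \<zeta> x + (1 - a) * \<xi> x)
      = c * (\<Sum>x\<in>sites N. a * (\<zeta> x * L \<zeta> x) + (1 - a) * (\<xi> x * L \<xi> x)
      - (a * \<zeta> x + (1 - a) * \<xi> x) * L (\<lambda>x. a * \<zeta> x + (1 - a) * \<xi> x) x)"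
    unfolding P by (simp add: sum_subtractf sum.distrib sum_distrib_left algebra_simps)
  also have "\<dots> = a * (1 - a) * prec_form N m t (\<lambda>x. \<zeta> x - \<xi> x)"
    unfolding pt P by (simp add: sum_distrib_left algebra_simps)
  also have "\<dots> \<ge> 0"
  proof -
    have "0 \<le> (1 / real N)^2 * (m^2 + 1/t) * (\<Sum>x\<in>sites N. (\<zeta> x - \<xi> x)^2)"
      using t by (intro mult_nonneg_nonneg sum_nonneg) auto
    then have "0 \<le> prec_form N m t (\<lambda>x. \<zeta> x - \<xi> x)" using prec_lower[OF t, of N m "\<lambda>x. \<zeta> x - \<xi> x"] by simp
    then show ?thesis using a by simp
  qed
  finally show ?thesis by simp
qed

definition Hf :: "nat \<Rightarrow> real \<Rightarrow> real \<Rightarrow> real \<Rightarrow> model \<Rightarrow> real \<Rightarrow> field \<Rightarrow> field \<Rightarrow> real" where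
  "Hf N m lam \<beta> E t \<phi> \<zeta> = exp (- v0 N lam \<beta> E (\<lambda>x. \<phi> x + \<zeta> x)) * exp (- prec_form N m t \<zeta> / 2)"

lemma V_pos: "0 < Vpot E \<beta> s"
  by (cases E) (auto simp: Vpot_def)

lemma V_convex:
  assumes a: "0 < a" "a < 1"
  shows "Vpot E \<beta> (a * s1 + (1 - a) * s2) \<le> a * Vpot E \<beta> s1 + (1 - a) * Vpot E \<beta> s2"
proof -
  have e: "sqrt \<beta> * (a * s1 + (1 - a) * s2) = a * (sqrt \<beta> * s1) + (1 - a) * (sqrt \<beta> * s2)"
    by (simp add: algebra_simps)
  have e2: "- (sqrt \<beta> * (a * s1 + (1 - a) * s2)) = a * (- (sqrt \<beta> * s1)) + (1 - a) * (- (sqrt \<beta> * s2))"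
    by (simp add: algebra_simps)
  show ?thesis
  proof (cases E)
    case Lv
    then show ?thesis unfolding Vpot_def using exp_convex_ineq[OF a] e by simp
  next
    case ShG
    have A: "exp (sqrt \<beta> * (a * s1 + (1 - a) * s2)) \<le> a * exp (sqrt \<beta> * s1) + (1 - a) * exp (sqrt \<beta> * s2)"
      unfolding e by (rule exp_convex_ineq[OF a])
    have B: "exp (- (sqrt \<beta> * (a * s1 + (1 - a) * s2))) \<le> a * exp (- (sqrt \<beta> * s1)) + (1 - a) * exp (- (sqrt \<beta> * s2))"
      unfolding e2 by (rule exp_convex_ineq[OF a])
    show ?thesis using ShG A B unfolding Vpot_def cosh_field_def by (simp add: field_simps)
  qed
qed

lemma v0_nonneg: "0 \<le> lam \<Longrightarrow> 0 \<le> v0 N lam \<beta> E \<phi>"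
  unfolding v0_def lat_int_def using V_pos by (intro mult_nonneg_nonneg sum_nonneg) (auto intro: less_imp_le)

lemma v0_convex:
  assumes lam: "0 \<le> lam" and a: "0 < a" "a < 1"
  shows "v0 N lam \<beta> E (\<lambda>x. a * \<phi> x + (1 - a) * \<psi> x) \<le> a * v0 N lam \<beta> E \<phi> + (1 - a) * v0 N lam \<beta> E \<psi>"
proof -
  define w where "w = (1 / real N) powr (\<beta> / (4 * pi))"
  have w: "0 \<le> w" unfolding w_def by simp
  have "(\<Sum>x\<in>sites N. w * Vpot E \<beta> (a * \<phi> x + (1 - a) * \<psi> x))
      \<le> (\<Sum>x\<in>sites N. a * (w * Vpot E \<beta> (\<phi> x)) + (1 - a) * (w * Vpot E \<beta> (\<psi> x)))"
  proof (rule sum_mono)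
    fix x
    have "w * Vpot E \<beta> (a * \<phi> x + (1 - a) * \<psi> x) \<le> w * (a * Vpot E \<beta> (\<phi> x) + (1 - a) * Vpot E \<beta> (\<psi> x))"
      using w V_convex[OF a] by (intro mult_left_mono) auto
    then show "w * Vpot E \<beta> (a * \<phi> x + (1 - a) * \<psi> x) \<le> a * (w * Vpot E \<beta> (\<phi> x)) + (1 - a) * (w * Vpot E \<beta> (\<psi> x))"
      by (simp add: algebra_simps)
  qed
  also have "\<dots> = a * (\<Sum>x\<in>sites N. w * Vpot E \<beta> (\<phi> x)) + (1 - a) * (\<Sum>x\<in>sites N. w * Vpot E \<beta> (\<psi> x))"
    by (simp add: sum.distrib sum_distrib_left)
  finally have S: "(\<Sum>x\<in>sites N. w * Vpot E \<beta> (a * \<phi> x + (1 - a) * \<psi> x))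
      \<le> a * (\<Sum>x\<in>sites N. w * Vpot E \<beta> (\<phi> x)) + (1 - a) * (\<Sum>x\<in>sites N. w * Vpot E \<beta> (\<psi> x))" .
  have "0 \<le> lam * (1 / real N)^2" using lam by simp
  from mult_left_mono[OF S this] show ?thesis
    unfolding v0_def lat_int_def w_def[symmetric] by (simp add: algebra_simps)
qed

lemma H_LCH:
  assumes lam: "0 \<le> lam" and t: "0 < t"
  shows "LCH (Hf N m lam \<beta> E t)"
  unfolding LCH_def
proof (intro allI impI)
  fix \<phi> \<psi> \<zeta> \<xi> :: field and a :: real assume a: "0 < a \<and> a < 1"
  define W where "W = (\<lambda>\<phi> \<zeta>. v0 N lam \<beta> E (\<lambda>x. \<phi> x + \<zeta> x) + prec_form N m t \<zeta> / 2)"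
  have HW: "Hf N m lam \<beta> E t \<phi>' \<zeta>' = exp (- W \<phi>' \<zeta>')" for \<phi>' \<zeta>'
    unfolding Hf_def W_def by (simp add: exp_add[symmetric] diff_divide_distrib)
  have e: "(\<lambda>x. (a * \<phi> x + (1 - a) * \<psi> x) + (a * \<zeta> x + (1 - a) * \<xi> x))
      = (\<lambda>x. a * (\<phi> x + \<zeta> x) + (1 - a) * (\<psi> x + \<xi> x))" by (simp add: algebra_simps)
  have Wc: "W (\<lambda>x. a * \<phi> x + (1 - a) * \<psi> x) (\<lambda>x. a * \<zeta> x + (1 - a) * \<xi> x) \<le> a * W \<phi> \<zeta> + (1 - a) * W \<psi> \<xi>"
  proof -
    have A: "v0 N lam \<beta> E (\<lambda>x. a * (\<phi> x + \<zeta> x) + (1 - a) * (\<psi> x + \<xi> x))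
        \<le> a * v0 N lam \<beta> E (\<lambda>x. \<phi> x + \<zeta> x) + (1 - a) * v0 N lam \<beta> E (\<lambda>x. \<psi> x + \<xi> x)"
      using v0_convex[OF lam, of a N \<beta> E "\<lambda>x. \<phi> x + \<zeta> x" "\<lambda>x. \<psi> x + \<xi> x"] a by simp
    have B: "prec_form N m t (\<lambda>x. a * \<zeta> x + (1 - a) * \<xi> x) \<le> a * prec_form N m t \<zeta> + (1 - a) * prec_form N m t \<xi>"
      using prec_convex[OF t, of a N m \<zeta> \<xi>] a by simp
    have C: "a * W \<phi> \<zeta> + (1 - a) * W \<psi> \<xi> = (a * v0 N lam \<beta> E (\<lambda>x. \<phi> x + \<zeta> x) + (1 - a) * v0 N lam \<beta> E (\<lambda>x. \<psi> x + \<xi> x))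
       + (a * prec_form N m t \<zeta> + (1 - a) * prec_form N m t \<xi>) / 2"
      unfolding W_def by (simp add: field_simps)
    show ?thesis unfolding C unfolding W_def e using add_mono[OF A divide_right_mono[OF B, of 2]] by simp
  qed
  have "Hf N m lam \<beta> E t \<phi> \<zeta> powr a * Hf N m lam \<beta> E t \<psi> \<xi> powr (1 - a) = exp (- (a * W \<phi> \<zeta> + (1 - a) * W \<psi> \<xi>))"
    unfolding HW exp_powr_real exp_add[symmetric] by (simp add: algebra_simps)
  also have "\<dots> \<le> exp (- W (\<lambda>x. a * \<phi> x + (1 - a) * \<psi> x) (\<lambda>x. a * \<zeta> x + (1 - a) * \<xi> x))"
    using Wc by simp
  finally show "Hf N m lam \<beta> E t \<phi> \<zeta> powr a * Hf N m lam \<beta> E t \<psi> \<xi> powr (1 - a)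
      \<le> Hf N m lam \<beta> E t (\<lambda>x. a * \<phi> x + (1 - a) * \<psi> x) (\<lambda>x. a * \<zeta> x + (1 - a) * \<xi> x)"
    unfolding HW .
qed

lemma prec_dep:
  assumes "\<forall>x\<in>sites N. \<zeta> x = \<xi> x"
  shows "prec_form N m t \<zeta> = prec_form N m t \<xi>"
  unfolding prec_form_def lat_int_def
  using assms sh_in by (intro arg_cong[where f="\<lambda>s. _ * s"] sum.cong refl) (simp add: lap_eq)

lemma v0_dep:
  assumes "\<forall>x\<in>sites N. \<zeta> x = \<xi> x"
  shows "v0 N lam \<beta> E (\<lambda>x. \<phi> x + \<zeta> x) = v0 N lam \<beta> E (\<lambda>x. \<phi> x + \<xi> x)"
  unfolding v0_def lat_int_def using assms by simp

lemma H_Dep: "DepI (sites N) (Hf N m lam \<beta> E t)"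
  unfolding DepI_def
proof (intro allI impI)
  fix \<phi> \<zeta> \<xi> :: field assume A: "\<forall>x\<in>sites N. \<zeta> x = \<xi> x"
  show "Hf N m lam \<beta> E t \<phi> \<zeta> = Hf N m lam \<beta> E t \<phi> \<xi>"
    unfolding Hf_def using prec_dep[OF A] v0_dep[OF A] by simp
qed

lemma comp_meas[measurable]:
  fixes y :: site and I :: "site set"
  shows "(\<lambda>\<zeta>. \<zeta> y) \<in> borel_measurable (PiM I (\<lambda>_. lborel :: real measure))"
proof (cases "y \<in> I")
  case True
  have "(\<lambda>\<zeta>. \<zeta> y) \<in> measurable (PiM I (\<lambda>_. lborel :: real measure)) (lborel :: real measure)"
    by (rule measurable_component_singleton[OF True])
  then show ?thesis by simp
next
  case False
  have "w y = undefined" if "w \<in> space (PiM I (\<lambda>_. lborel :: real measure))" for w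
    using that False unfolding space_PiM PiE_def extensional_def by blast
  then show ?thesis
    by (subst measurable_cong[where g="\<lambda>_. undefined"]) auto
qed

lemma comp_meas_borel[measurable]:
  fixes y :: site and I :: "site set"
  shows "(\<lambda>\<zeta>. \<zeta> y) \<in> borel_measurable (PiM I (\<lambda>_. borel :: real measure))"
proof (cases "y \<in> I")
  case True
  have "(\<lambda>\<zeta>. \<zeta> y) \<in> measurable (PiM I (\<lambda>_. borel :: real measure)) (borel :: real measure)"
    by (rule measurable_component_singleton[OF True])
  then show ?thesis by simp
next
  case False
  have "w y = undefined" if "w \<in> space (PiM I (\<lambda>_. borel :: real measure))" for w
    using that False unfolding space_PiM PiE_def extensional_def by blast
  then show ?thesis
    by (subst measurable_cong[where g="\<lambda>_. undefined"]) auto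
qed

lemma lap_meas[measurable]: "(\<lambda>\<zeta>. lap N \<zeta> x) \<in> borel_measurable (PiM I (\<lambda>_. lborel))"
  unfolding lap_eq by measurable
lemma lap_meas_borel[measurable]: "(\<lambda>\<zeta>. lap N \<zeta> x) \<in> borel_measurable (PiM I (\<lambda>_. borel))"
  unfolding lap_eq by measurable
lemma prec_meas[measurable]: "(\<lambda>\<zeta>. prec_form N m t \<zeta>) \<in> borel_measurable (PiM I (\<lambda>_. lborel))"
  unfolding prec_form_def lat_int_def by measurable
lemma prec_meas_borel[measurable]: "(\<lambda>\<zeta>. prec_form N m t \<zeta>) \<in> borel_measurable (PiM I (\<lambda>_. borel))"
  unfolding prec_form_def lat_int_def by measurable
lemma V_meas[measurable]: "Vpot E \<beta> \<in> borel_measurable borel"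
  unfolding Vpot_def by (cases E) (auto intro!: borel_measurable_continuous_onI continuous_intros)
lemma v0_meas[measurable]: "(\<lambda>\<zeta>. v0 N lam \<beta> E (\<lambda>x. \<phi> x + \<zeta> x)) \<in> borel_measurable (PiM I (\<lambda>_. lborel))"
  unfolding v0_def lat_int_def by measurable
lemma v0_meas_borel[measurable]: "(\<lambda>\<zeta>. v0 N lam \<beta> E (\<lambda>x. \<phi> x + \<zeta> x)) \<in> borel_measurable (PiM I (\<lambda>_. borel))"
  unfolding v0_def lat_int_def by measurable
lemma H_meas: "Hf N m lam \<beta> E t \<phi> \<in> borel_measurable (PiM I (\<lambda>_. lborel))"
  unfolding Hf_def by measurable

lemma space_pos: "emeasure (PiM (sites N) (\<lambda>_. lborel :: real measure)) (space (PiM (sites N) (\<lambda>_. lborel))) \<noteq> 0"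
proof -
  interpret product_sigma_finite "\<lambda>_::site. lborel :: real measure" by standard
  have "emeasure (PiM (sites N) (\<lambda>_. lborel :: real measure)) (PiE (sites N) (\<lambda>_. {0..1})) = (\<Prod>i\<in>sites N. emeasure lborel {0..(1::real)})"
    using sites_finite by (intro emeasure_PiM) auto
  also have "\<dots> = 1" by simp
  finally have "1 \<le> emeasure (PiM (sites N) (\<lambda>_. lborel :: real measure)) (space (PiM (sites N) (\<lambda>_. lborel)))"
    by (metis emeasure_space)
  then show ?thesis by auto
qed

definition kap :: "nat \<Rightarrow> real \<Rightarrow> real \<Rightarrow> real" where
  "kap N m t = (1 / real N)^2 * (m^2 + 1/t) / 2"

lemma kap_pos: "N \<ge> 1 \<Longrightarrow> 0 < t \<Longrightarrow> 0 < kap N m t"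
  unfolding kap_def by (simp add: add_nonneg_pos)

lemma rho_bound:
  assumes t: "0 < t"
  shows "exp (- prec_form N m t \<zeta> / 2) \<le> 1 * (\<Prod>x\<in>sites N. exp (- kap N m t * (\<zeta> x)^2))"
proof -
  have "(\<Prod>x\<in>sites N. exp (- kap N m t * (\<zeta> x)^2)) = exp (\<Sum>x\<in>sites N. - kap N m t * (\<zeta> x)^2)"
    using sites_finite by (simp add: exp_sum)
  also have "(\<Sum>x\<in>sites N. - kap N m t * (\<zeta> x)^2) = - ((1 / real N)^2 * (m^2 + 1/t) * (\<Sum>x\<in>sites N. (\<zeta> x)^2)) / 2"
  proof -
    have "(\<Sum>x\<in>sites N. - kap N m t * (\<zeta> x)^2) = - kap N m t * (\<Sum>x\<in>sites N. (\<zeta> x)^2)"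
      by (simp add: sum_distrib_left)
    then show ?thesis unfolding kap_def by simp
  qed
  finally have e: "(\<Prod>x\<in>sites N. exp (- kap N m t * (\<zeta> x)^2)) = exp (- ((1 / real N)^2 * (m^2 + 1/t) * (\<Sum>x\<in>sites N. (\<zeta> x)^2)) / 2)" .
  show ?thesis unfolding e using prec_lower[OF t, of N m \<zeta>] by simp
qed

lemma H_bound:
  assumes lam: "0 \<le> lam" and t: "0 < t"
  shows "Hf N m lam \<beta> E t \<phi> \<zeta> \<le> 1 * (\<Prod>x\<in>sites N. exp (- kap N m t * (\<zeta> x)^2))"
proof -
  have "exp (- v0 N lam \<beta> E (\<lambda>x. \<phi> x + \<zeta> x)) \<le> 1" using v0_nonneg[OF lam] by simp
  then have "Hf N m lam \<beta> E t \<phi> \<zeta> \<le> exp (- prec_form N m t \<zeta> / 2)"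
    unfolding Hf_def by (simp add: mult_left_le_one_le)
  also have "\<dots> \<le> 1 * (\<Prod>x\<in>sites N. exp (- kap N m t * (\<zeta> x)^2))" by (rule rho_bound[OF t])
  finally show ?thesis .
qed

lemma H_int:
  assumes N: "N \<ge> 1" and lam: "0 \<le> lam" and t: "0 < t"
  shows "integrable (PiM (sites N) (\<lambda>_. lborel)) (Hf N m lam \<beta> E t \<phi>)"
  by (rule integrable_H[OF sites_finite _ H_meas H_bound[OF lam t] gauss_integrable[OF kap_pos[OF N t]]])
     (auto simp: Hf_def)

lemma rho_int:
  assumes N: "N \<ge> 1" and t: "0 < t"
  shows "integrable (PiM (sites N) (\<lambda>_. lborel)) (\<lambda>\<zeta>. exp (- prec_form N m t \<zeta> / 2))"
  by (rule integrable_H[OF sites_finite _ _ rho_bound[OF t] gauss_integrable[OF kap_pos[OF N t]]]) auto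

lemma F_pos:
  assumes N: "N \<ge> 1" and lam: "0 \<le> lam" and t: "0 < t"
  shows "0 < (\<integral>\<zeta>. Hf N m lam \<beta> E t \<phi> \<zeta> \<partial>PiM (sites N) (\<lambda>_. lborel))"
  by (rule pos_int[OF H_int[OF N lam t] _ space_pos]) (simp add: Hf_def)

lemma Z_pos:
  assumes N: "N \<ge> 1" and t: "0 < t"
  shows "0 < (\<integral>\<zeta>. exp (- prec_form N m t \<zeta> / 2) \<partial>PiM (sites N) (\<lambda>_. lborel))"
  by (rule pos_int[OF rho_int[OF N t] _ space_pos]) simp

lemma F_LC:
  assumes N: "N \<ge> 1" and lam: "0 \<le> lam" and t: "0 < t" and a: "0 < a" "a < 1"
  shows "(\<integral>\<zeta>. Hf N m lam \<beta> E t \<phi> \<zeta> \<partial>PiM (sites N) (\<lambda>_. lborel)) powr a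
       * (\<integral>\<zeta>. Hf N m lam \<beta> E t \<psi> \<zeta> \<partial>PiM (sites N) (\<lambda>_. lborel)) powr (1 - a)
     \<le> (\<integral>\<zeta>. Hf N m lam \<beta> E t (\<lambda>x. a * \<phi> x + (1 - a) * \<psi> x) \<zeta> \<partial>PiM (sites N) (\<lambda>_. lborel))"
proof (rule marg[OF gauss_integrable[OF kap_pos[OF N t]] _ _ a sites_finite])
  show "\<And>y. 0 \<le> exp (- kap N m t * y\<^sup>2)" by simp
  show "\<And>y. exp (- kap N m t * y\<^sup>2) \<le> 1"
  proof -
    fix y
    have k: "0 < kap N m t" by (rule kap_pos[OF N t])
    have "0 \<le> kap N m t * y\<^sup>2" using k by (intro mult_nonneg_nonneg) auto
    then show "exp (- kap N m t * y\<^sup>2) \<le> 1" by simp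
  qed
  show "\<forall>\<phi> \<zeta>. 0 \<le> Hf N m lam \<beta> E t \<phi> \<zeta>" by (simp add: Hf_def)
  show "\<forall>\<phi>. Hf N m lam \<beta> E t \<phi> \<in> borel_measurable (PiM (sites N) (\<lambda>_. lborel))" using H_meas by auto
  show "\<forall>\<phi> \<zeta>. Hf N m lam \<beta> E t \<phi> \<zeta> \<le> 1 * (\<Prod>x\<in>sites N. exp (- kap N m t * (\<zeta> x)\<^sup>2))"
    using H_bound[OF lam t] by auto
  show "DepI (sites N) (Hf N m lam \<beta> E t)" by (rule H_Dep)
  show "LCH (Hf N m lam \<beta> E t)" by (rule H_LCH[OF lam t])
qed

definition V1 :: "model \<Rightarrow> real \<Rightarrow> real \<Rightarrow> real" where
  "V1 E \<beta> s = (case E of Lv \<Rightarrow> sqrt \<beta> * exp (sqrt \<beta> * s) | ShG \<Rightarrow> sqrt \<beta> * sinh (sqrt \<beta> * s))"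

definition V2 :: "model \<Rightarrow> real \<Rightarrow> real \<Rightarrow> real" where
  "V2 E \<beta> s = \<beta> * Vpot E \<beta> s"

lemma Vpot_eq: "Vpot Lv \<beta> = (\<lambda>s. exp (sqrt \<beta> * s))" "Vpot ShG \<beta> = (\<lambda>s. cosh (sqrt \<beta> * s))"
  by (auto simp: Vpot_def)

lemma V1_eq: "V1 Lv \<beta> = (\<lambda>s. sqrt \<beta> * exp (sqrt \<beta> * s))" "V1 ShG \<beta> = (\<lambda>s. sqrt \<beta> * sinh (sqrt \<beta> * s))"
  by (auto simp: V1_def)

lemma V_deriv: "(Vpot E \<beta> has_real_derivative V1 E \<beta> s) (at s within S)"
  by (cases E) (auto simp: Vpot_eq V1_eq intro!: derivative_eq_intros)

lemma V1_deriv: "0 \<le> \<beta> \<Longrightarrow> (V1 E \<beta> has_real_derivative V2 E \<beta> s) (at s within S)"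
  by (cases E) (auto simp: Vpot_def V1_eq V2_def intro!: derivative_eq_intros)

lemma V_deriv_chain[derivative_intros]:
  "(f has_real_derivative f') (at x within S) \<Longrightarrow>
    ((\<lambda>s. Vpot E \<beta> (f s)) has_real_derivative V1 E \<beta> (f x) * f') (at x within S)"
  by (rule DERIV_chain2[OF V_deriv])

lemma V1_deriv_chain[derivative_intros]:
  "0 \<le> \<beta> \<Longrightarrow> (f has_real_derivative f') (at x within S) \<Longrightarrow>
    ((\<lambda>s. V1 E \<beta> (f s)) has_real_derivative V2 E \<beta> (f x) * f') (at x within S)"
  by (rule DERIV_chain2[OF V1_deriv])

lemma V1_meas[measurable]: "V1 E \<beta> \<in> borel_measurable borel"
  unfolding V1_def by (cases E) (auto intro!: borel_measurable_continuous_onI continuous_intros)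

lemma V2_meas[measurable]: "V2 E \<beta> \<in> borel_measurable borel"
  unfolding V2_def by measurable

lemma V1_bound:
  assumes b: "0 \<le> \<beta>"
  shows "\<bar>V1 E \<beta> s\<bar> \<le> sqrt \<beta> * Vpot E \<beta> s"
proof (cases E)
  case Lv then show ?thesis using b by (simp add: V1_def Vpot_def abs_mult)
next
  case ShG
  have "\<bar>sinh (sqrt \<beta> * s)\<bar> \<le> cosh (sqrt \<beta> * s)"
    unfolding sinh_field_def cosh_field_def
    using exp_gt_zero[of "sqrt \<beta> * s"] exp_gt_zero[of "- (sqrt \<beta> * s)"]
    by (auto simp: abs_le_iff field_simps)
  then show ?thesis using ShG b by (simp add: V1_def Vpot_def abs_mult mult_left_mono)
qed

lemma V2_nonneg: "0 \<le> \<beta> \<Longrightarrow> 0 \<le> V2 E \<beta> s"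
  unfolding V2_def using V_pos[of E \<beta> s] by simp

definition Acoef :: "nat \<Rightarrow> real \<Rightarrow> real \<Rightarrow> real" where
  "Acoef N lam \<beta> = lam * (1 / real N)^2 * (1 / real N) powr (\<beta> / (4 * pi))"

lemma v0_sum: "v0 N lam \<beta> E \<psi> = Acoef N lam \<beta> * (\<Sum>x\<in>sites N. Vpot E \<beta> (\<psi> x))"
  unfolding v0_def lat_int_def Acoef_def sum_distrib_left[symmetric] by (simp add: algebra_simps)

definition u1 :: "nat \<Rightarrow> real \<Rightarrow> real \<Rightarrow> model \<Rightarrow> field \<Rightarrow> field \<Rightarrow> real \<Rightarrow> real" where
  "u1 N lam \<beta> E \<psi> h s = Acoef N lam \<beta> * (\<Sum>x\<in>sites N. V1 E \<beta> (\<psi> x + s * h x) * h x)"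

definition u2 :: "nat \<Rightarrow> real \<Rightarrow> real \<Rightarrow> model \<Rightarrow> field \<Rightarrow> field \<Rightarrow> real \<Rightarrow> real" where
  "u2 N lam \<beta> E \<psi> h s = Acoef N lam \<beta> * (\<Sum>x\<in>sites N. V2 E \<beta> (\<psi> x + s * h x) * (h x * h x))"

lemma u_deriv: "((\<lambda>s. v0 N lam \<beta> E (\<lambda>x. \<psi> x + s * h x)) has_real_derivative u1 N lam \<beta> E \<psi> h s) (at s within S)"
proof -
  have "((\<lambda>s. \<Sum>x\<in>sites N. Vpot E \<beta> (\<psi> x + s * h x)) has_real_derivative
      (\<Sum>x\<in>sites N. V1 E \<beta> (\<psi> x + s * h x) * h x)) (at s within S)"
    by (auto intro!: derivative_eq_intros)
  from DERIV_cmult[OF this, of "Acoef N lam \<beta>"] show ?thesis unfolding v0_sum u1_def .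
qed

lemma u1_deriv: "0 \<le> \<beta> \<Longrightarrow> (u1 N lam \<beta> E \<psi> h has_real_derivative u2 N lam \<beta> E \<psi> h s) (at s within S)"
proof -
  assume b: "0 \<le> \<beta>"
  have "((\<lambda>s. \<Sum>x\<in>sites N. V1 E \<beta> (\<psi> x + s * h x) * h x) has_real_derivative
      (\<Sum>x\<in>sites N. V2 E \<beta> (\<psi> x + s * h x) * (h x * h x))) (at s within S)"
    using b by (auto intro!: derivative_eq_intros simp: algebra_simps)
  from DERIV_cmult[OF this, of "Acoef N lam \<beta>"] show ?thesis unfolding u1_def[abs_def] u2_def .
qed

definition Hm :: "nat \<Rightarrow> field \<Rightarrow> real" where
  "Hm N h = (\<Sum>x\<in>sites N. \<bar>h x\<bar>)"

lemma h_le_Hm: "x \<in> sites N \<Longrightarrow> \<bar>h x\<bar> \<le> Hm N h"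
  unfolding Hm_def using sites_finite by (intro member_le_sum) auto

lemma Hm_nonneg: "0 \<le> Hm N h"
  unfolding Hm_def by (simp add: sum_nonneg)

lemma Acoef_nonneg: "0 \<le> lam \<Longrightarrow> 0 \<le> Acoef N lam \<beta>"
  unfolding Acoef_def by simp

lemma u1_bound:
  assumes lam: "0 \<le> lam" and b: "0 \<le> \<beta>"
  shows "\<bar>u1 N lam \<beta> E \<psi> h s\<bar> \<le> sqrt \<beta> * Hm N h * v0 N lam \<beta> E (\<lambda>x. \<psi> x + s * h x)"
proof -
  have "\<bar>\<Sum>x\<in>sites N. V1 E \<beta> (\<psi> x + s * h x) * h x\<bar> \<le> (\<Sum>x\<in>sites N. \<bar>V1 E \<beta> (\<psi> x + s * h x) * h x\<bar>)"
    by (rule sum_abs)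
  also have "\<dots> \<le> (\<Sum>x\<in>sites N. sqrt \<beta> * Hm N h * Vpot E \<beta> (\<psi> x + s * h x))"
  proof (rule sum_mono)
    fix x assume x: "x \<in> sites N"
    have "\<bar>V1 E \<beta> (\<psi> x + s * h x) * h x\<bar> = \<bar>V1 E \<beta> (\<psi> x + s * h x)\<bar> * \<bar>h x\<bar>" by (simp add: abs_mult)
    also have "\<dots> \<le> (sqrt \<beta> * Vpot E \<beta> (\<psi> x + s * h x)) * Hm N h"
    proof -
      have "0 \<le> sqrt \<beta> * Vpot E \<beta> (\<psi> x + s * h x)" using b V_pos[of E \<beta>] by (simp add: less_imp_le)
      then show ?thesis using V1_bound[OF b] h_le_Hm[OF x] by (intro mult_mono) auto
    qed
    finally show "\<bar>V1 E \<beta> (\<psi> x + s * h x) * h x\<bar> \<le> sqrt \<beta> * Hm N h * Vpot E \<beta> (\<psi> x + s * h x)"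
      by (simp add: algebra_simps)
  qed
  also have "\<dots> = sqrt \<beta> * Hm N h * (\<Sum>x\<in>sites N. Vpot E \<beta> (\<psi> x + s * h x))"
    by (simp add: sum_distrib_left)
  finally have S: "\<bar>\<Sum>x\<in>sites N. V1 E \<beta> (\<psi> x + s * h x) * h x\<bar> \<le> sqrt \<beta> * Hm N h * (\<Sum>x\<in>sites N. Vpot E \<beta> (\<psi> x + s * h x))" .
  have "\<bar>u1 N lam \<beta> E \<psi> h s\<bar> = Acoef N lam \<beta> * \<bar>\<Sum>x\<in>sites N. V1 E \<beta> (\<psi> x + s * h x) * h x\<bar>"
    unfolding u1_def using Acoef_nonneg[OF lam] by (simp add: abs_mult)
  also have "\<dots> \<le> Acoef N lam \<beta> * (sqrt \<beta> * Hm N h * (\<Sum>x\<in>sites N. Vpot E \<beta> (\<psi> x + s * h x)))"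
    using S Acoef_nonneg[OF lam] by (rule mult_left_mono)
  also have "\<dots> = sqrt \<beta> * Hm N h * v0 N lam \<beta> E (\<lambda>x. \<psi> x + s * h x)"
    unfolding v0_sum by simp
  finally show ?thesis .
qed

lemma u2_bound:
  assumes lam: "0 \<le> lam" and b: "0 \<le> \<beta>"
  shows "0 \<le> u2 N lam \<beta> E \<psi> h s" "u2 N lam \<beta> E \<psi> h s \<le> \<beta> * Hm N h ^ 2 * v0 N lam \<beta> E (\<lambda>x. \<psi> x + s * h x)"
proof -
  show "0 \<le> u2 N lam \<beta> E \<psi> h s"
  proof -
    have "0 \<le> V2 E \<beta> (\<psi> x + s * h x) * (h x * h x)" for x using V2_nonneg[OF b] by simp
    then show ?thesis unfolding u2_def by (rule mult_nonneg_nonneg[OF Acoef_nonneg[OF lam] sum_nonneg])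
  qed
  have "(\<Sum>x\<in>sites N. V2 E \<beta> (\<psi> x + s * h x) * (h x * h x))
      \<le> (\<Sum>x\<in>sites N. \<beta> * Hm N h ^ 2 * Vpot E \<beta> (\<psi> x + s * h x))"
  proof (rule sum_mono)
    fix x assume x: "x \<in> sites N"
    have hh: "h x * h x \<le> Hm N h ^ 2"
    proof -
      have "h x * h x = \<bar>h x\<bar> * \<bar>h x\<bar>" by simp
      also have "\<dots> \<le> Hm N h * Hm N h" using h_le_Hm[OF x] Hm_nonneg by (intro mult_mono) auto
      finally show ?thesis by (simp add: power2_eq_square)
    qed
    have "V2 E \<beta> (\<psi> x + s * h x) * (h x * h x) \<le> V2 E \<beta> (\<psi> x + s * h x) * Hm N h ^ 2"
      using hh V2_nonneg[OF b] by (intro mult_left_mono) auto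
    then show "V2 E \<beta> (\<psi> x + s * h x) * (h x * h x) \<le> \<beta> * Hm N h ^ 2 * Vpot E \<beta> (\<psi> x + s * h x)"
      unfolding V2_def by (simp add: algebra_simps)
  qed
  then have "Acoef N lam \<beta> * (\<Sum>x\<in>sites N. V2 E \<beta> (\<psi> x + s * h x) * (h x * h x))
      \<le> Acoef N lam \<beta> * (\<Sum>x\<in>sites N. \<beta> * Hm N h ^ 2 * Vpot E \<beta> (\<psi> x + s * h x))"
    using Acoef_nonneg[OF lam] by (rule mult_left_mono)
  then show "u2 N lam \<beta> E \<psi> h s \<le> \<beta> * Hm N h ^ 2 * v0 N lam \<beta> E (\<lambda>x. \<psi> x + s * h x)"
    unfolding u2_def v0_sum by (simp add: sum_distrib_left[symmetric] algebra_simps)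
qed

lemma uexp_bound1: "0 \<le> u \<Longrightarrow> u * exp (- u) \<le> (1::real)"
proof -
  assume u: "0 \<le> u"
  have "u \<le> exp u" using exp_ge_add_one_self[of u] by linarith
  then show ?thesis by (simp add: exp_minus field_simps)
qed

lemma uexp_bound2: "0 \<le> u \<Longrightarrow> u^2 * exp (- u) \<le> (4::real)"
proof -
  assume u: "0 \<le> u"
  have "u / 2 \<le> exp (u / 2)" using exp_ge_add_one_self[of "u/2"] by linarith
  then have "(u / 2)^2 \<le> (exp (u / 2))^2" using u by (intro power_mono) auto
  also have "(exp (u / 2))^2 = exp u" by (simp add: power2_eq_square exp_add[symmetric])
  finally have "u^2 \<le> 4 * exp u" by (simp add: power_divide)
  then show ?thesis by (simp add: exp_minus field_simps)
qed

lemma deriv_convex_nonneg: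
  fixes g g' :: "real \<Rightarrow> real"
  assumes cv: "convex_on UNIV g" and d: "\<And>s. (g has_real_derivative g' s) (at s)"
    and d2: "(g' has_real_derivative D) (at 0)"
  shows "0 \<le> D"
proof -
  have tan: "g y - g x \<ge> g' x * (y - x)" for x y
    by (rule convex_on_imp_above_tangent[OF cv]) (use d in auto)
  have mono: "(g' y - g' 0) / (y - 0) \<ge> 0" if "y \<noteq> 0" for y
  proof -
    have "g' 0 * (y - 0) \<le> g y - g 0" using tan[of 0 y] by simp
    moreover have "g' y * (0 - y) \<le> g 0 - g y" using tan[of y 0] by simp
    ultimately have "(g' y - g' 0) * y \<ge> 0" by (simp add: algebra_simps)
    then show ?thesis using that by (simp add: zero_le_divide_iff zero_le_mult_iff)
  qed
  have "((\<lambda>y. (g' y - g' 0) / (y - 0)) \<longlongrightarrow> D) (at 0)"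
    using d2 unfolding has_field_derivative_iff .
  moreover have "eventually (\<lambda>y. (g' y - g' 0) / (y - 0) \<ge> 0) (at 0)"
    unfolding eventually_at_filter using mono by auto
  ultimately show ?thesis by (rule tendsto_lowerbound) auto
qed

lemma v0_line_meas[measurable]:
  "(\<lambda>\<zeta>. v0 N lam \<beta> E (\<lambda>x. \<phi> x + \<zeta> x + s * h x)) \<in> borel_measurable (PiM I (\<lambda>_. lborel))"
  unfolding v0_sum by measurable

lemma v0_line_meas_borel[measurable]:
  "(\<lambda>\<zeta>. v0 N lam \<beta> E (\<lambda>x. \<phi> x + \<zeta> x + s * h x)) \<in> borel_measurable (PiM I (\<lambda>_. borel))"
  unfolding v0_sum by measurable

lemma u1_meas[measurable]:
  "(\<lambda>\<zeta>. u1 N lam \<beta> E (\<lambda>x. \<phi> x + \<zeta> x) h s) \<in> borel_measurable (PiM I (\<lambda>_. lborel))"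
  unfolding u1_def by measurable

lemma u1_meas_borel[measurable]:
  "(\<lambda>\<zeta>. u1 N lam \<beta> E (\<lambda>x. \<phi> x + \<zeta> x) h s) \<in> borel_measurable (PiM I (\<lambda>_. borel))"
  unfolding u1_def by measurable

lemma u2_meas[measurable]:
  "(\<lambda>\<zeta>. u2 N lam \<beta> E (\<lambda>x. \<phi> x + \<zeta> x) h s) \<in> borel_measurable (PiM I (\<lambda>_. lborel))"
  unfolding u2_def by measurable

lemma u2_meas_borel[measurable]:
  "(\<lambda>\<zeta>. u2 N lam \<beta> E (\<lambda>x. \<phi> x + \<zeta> x) h s) \<in> borel_measurable (PiM I (\<lambda>_. borel))"
  unfolding u2_def by measurable

definition f0 where
  "f0 N m lam \<beta> E t \<phi> h s \<zeta> = exp (- v0 N lam \<beta> E (\<lambda>x. \<phi> x + \<zeta> x + s * h x)) * exp (- prec_form N m t \<zeta> / 2)"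

definition f1 where
  "f1 N m lam \<beta> E t \<phi> h s \<zeta> = - u1 N lam \<beta> E (\<lambda>x. \<phi> x + \<zeta> x) h s
     * exp (- v0 N lam \<beta> E (\<lambda>x. \<phi> x + \<zeta> x + s * h x)) * exp (- prec_form N m t \<zeta> / 2)"

definition f2 where
  "f2 N m lam \<beta> E t \<phi> h s \<zeta> = ((u1 N lam \<beta> E (\<lambda>x. \<phi> x + \<zeta> x) h s)^2 - u2 N lam \<beta> E (\<lambda>x. \<phi> x + \<zeta> x) h s)
     * exp (- v0 N lam \<beta> E (\<lambda>x. \<phi> x + \<zeta> x + s * h x)) * exp (- prec_form N m t \<zeta> / 2)"

lemma f0_meas: "f0 N m lam \<beta> E t \<phi> h s \<in> borel_measurable (PiM I (\<lambda>_. lborel))"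
  unfolding f0_def[abs_def] by measurable

lemma f1_meas: "f1 N m lam \<beta> E t \<phi> h s \<in> borel_measurable (PiM I (\<lambda>_. lborel))"
  unfolding f1_def[abs_def] by measurable

lemma f2_meas: "f2 N m lam \<beta> E t \<phi> h s \<in> borel_measurable (PiM I (\<lambda>_. lborel))"
  unfolding f2_def[abs_def] by measurable

lemma f0_deriv: "((\<lambda>s. f0 N m lam \<beta> E t \<phi> h s \<zeta>) has_real_derivative f1 N m lam \<beta> E t \<phi> h s \<zeta>) (at s)"
  unfolding f0_def f1_def
  by (auto intro!: derivative_eq_intros u_deriv[where \<psi>="\<lambda>x. \<phi> x + \<zeta> x", simplified])

lemma f1_deriv: "0 \<le> \<beta> \<Longrightarrow> ((\<lambda>s. f1 N m lam \<beta> E t \<phi> h s \<zeta>) has_real_derivative f2 N m lam \<beta> E t \<phi> h s \<zeta>) (at s)"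
  unfolding f1_def f2_def
  by (auto intro!: derivative_eq_intros u_deriv[where \<psi>="\<lambda>x. \<phi> x + \<zeta> x", simplified]
      u1_deriv[where \<psi>="\<lambda>x. \<phi> x + \<zeta> x"]) (simp add: power2_eq_square algebra_simps)

lemma line_eq:
  fixes \<phi> h \<zeta> :: field and s :: real
  shows "(\<lambda>x. \<phi> x + s * h x + \<zeta> x) = (\<lambda>x. \<phi> x + \<zeta> x + s * h x)"
  by (rule ext) (simp add: add_ac)

lemma f0_Hf: "f0 N m lam \<beta> E t \<phi> h s = Hf N m lam \<beta> E t (\<lambda>x. \<phi> x + s * h x)"
  unfolding f0_def[abs_def] Hf_def[abs_def] line_eq ..

lemma f1_bound:
  assumes lam: "0 \<le> lam" and b: "0 \<le> \<beta>"
  shows "\<bar>f1 N m lam \<beta> E t \<phi> h s \<zeta>\<bar> \<le> sqrt \<beta> * Hm N h * exp (- prec_form N m t \<zeta> / 2)"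
proof -
  define v where "v = v0 N lam \<beta> E (\<lambda>x. \<phi> x + \<zeta> x + s * h x)"
  define \<rho> where "\<rho> = exp (- prec_form N m t \<zeta> / 2)"
  have v: "0 \<le> v" unfolding v_def by (rule v0_nonneg[OF lam])
  have \<rho>: "0 < \<rho>" unfolding \<rho>_def by simp
  have u: "\<bar>u1 N lam \<beta> E (\<lambda>x. \<phi> x + \<zeta> x) h s\<bar> \<le> sqrt \<beta> * Hm N h * v"
    unfolding v_def using u1_bound[OF lam b, of N E "\<lambda>x. \<phi> x + \<zeta> x" h s] by simp
  have "\<bar>f1 N m lam \<beta> E t \<phi> h s \<zeta>\<bar> = \<bar>u1 N lam \<beta> E (\<lambda>x. \<phi> x + \<zeta> x) h s\<bar> * exp (- v) * \<rho>"
    unfolding f1_def v_def[symmetric] \<rho>_def[symmetric] using \<rho> by (simp add: abs_mult)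
  also have "\<dots> \<le> (sqrt \<beta> * Hm N h * v) * exp (- v) * \<rho>"
    using u \<rho> by (intro mult_right_mono) auto
  also have "\<dots> = sqrt \<beta> * Hm N h * (v * exp (- v)) * \<rho>" by simp
  also have "\<dots> \<le> sqrt \<beta> * Hm N h * 1 * \<rho>"
    using uexp_bound1[OF v] \<rho> b Hm_nonneg[of N h] by (intro mult_right_mono mult_left_mono) auto
  finally show ?thesis unfolding \<rho>_def by simp
qed

lemma f2_bound:
  assumes lam: "0 \<le> lam" and b: "0 \<le> \<beta>"
  shows "\<bar>f2 N m lam \<beta> E t \<phi> h s \<zeta>\<bar> \<le> 5 * \<beta> * Hm N h ^ 2 * exp (- prec_form N m t \<zeta> / 2)"
proof -
  define v where "v = v0 N lam \<beta> E (\<lambda>x. \<phi> x + \<zeta> x + s * h x)"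
  define \<rho> where "\<rho> = exp (- prec_form N m t \<zeta> / 2)"
  define U1 where "U1 = u1 N lam \<beta> E (\<lambda>x. \<phi> x + \<zeta> x) h s"
  define U2 where "U2 = u2 N lam \<beta> E (\<lambda>x. \<phi> x + \<zeta> x) h s"
  define K where "K = \<beta> * Hm N h ^ 2"
  have K: "0 \<le> K" unfolding K_def using b by simp
  have v: "0 \<le> v" unfolding v_def by (rule v0_nonneg[OF lam])
  have \<rho>: "0 < \<rho>" unfolding \<rho>_def by simp
  have u1: "\<bar>U1\<bar> \<le> sqrt \<beta> * Hm N h * v"
    unfolding v_def U1_def using u1_bound[OF lam b, of N E "\<lambda>x. \<phi> x + \<zeta> x" h s] by simp
  have u1sq: "U1^2 \<le> K * v^2"
  proof -
    have "U1^2 = \<bar>U1\<bar>^2" by simp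
    also have "\<dots> \<le> (sqrt \<beta> * Hm N h * v)^2" using u1 by (intro power_mono) auto
    also have "\<dots> = K * v^2" unfolding K_def using b by (simp add: power_mult_distrib)
    finally show ?thesis .
  qed
  have u2: "0 \<le> U2" "U2 \<le> K * v"
    unfolding U2_def K_def v_def using u2_bound[OF lam b, of N E "\<lambda>x. \<phi> x + \<zeta> x" h s] by simp_all
  have "\<bar>f2 N m lam \<beta> E t \<phi> h s \<zeta>\<bar> = \<bar>U1^2 - U2\<bar> * exp (- v) * \<rho>"
    unfolding f2_def v_def[symmetric] \<rho>_def[symmetric] U1_def[symmetric] U2_def[symmetric]
    using \<rho> by (simp add: abs_mult)
  also have "\<dots> \<le> (K * v^2 + K * v) * exp (- v) * \<rho>"
  proof -
    have "\<bar>U1^2 - U2\<bar> \<le> K * v^2 + K * v" using u1sq u2 by (simp add: abs_le_iff) (smt (verit) zero_le_power2)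
    then show ?thesis using \<rho> by (intro mult_right_mono) auto
  qed
  also have "\<dots> = K * (v^2 * exp (- v) + v * exp (- v)) * \<rho>" by (simp add: algebra_simps)
  also have "\<dots> \<le> K * (4 + 1) * \<rho>"
    using uexp_bound1[OF v] uexp_bound2[OF v] K \<rho> by (intro mult_right_mono mult_left_mono add_mono) auto
  finally show ?thesis unfolding \<rho>_def K_def by simp
qed

lemma f0_int:
  assumes N: "N \<ge> 1" and lam: "0 \<le> lam" and t: "0 < t"
  shows "integrable (PiM (sites N) (\<lambda>_. lborel)) (f0 N m lam \<beta> E t \<phi> h s)"
  unfolding f0_Hf by (rule H_int[OF N lam t])

lemma w_int:
  assumes N: "N \<ge> 1" and t: "0 < t"
  shows "integrable (PiM (sites N) (\<lambda>_. lborel)) (\<lambda>\<zeta>. c * exp (- prec_form N m t \<zeta> / 2))"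
  using rho_int[OF N t] by simp

lemma f1_int:
  assumes N: "N \<ge> 1" and lam: "0 \<le> lam" and t: "0 < t" and b: "0 \<le> \<beta>"
  shows "integrable (PiM (sites N) (\<lambda>_. lborel)) (f1 N m lam \<beta> E t \<phi> h s)"
proof (rule Bochner_Integration.integrable_bound[OF w_int[OF N t, of "sqrt \<beta> * Hm N h"] f1_meas], intro AE_I2)
  fix \<zeta>
  have "0 \<le> sqrt \<beta> * Hm N h * exp (- prec_form N m t \<zeta> / 2)" using b Hm_nonneg[of N h] by simp
  then show "norm (f1 N m lam \<beta> E t \<phi> h s \<zeta>) \<le> norm (sqrt \<beta> * Hm N h * exp (- prec_form N m t \<zeta> / 2))"
    using f1_bound[OF lam b] by simp
qed

lemma F_deriv:
  assumes N: "N \<ge> 1" and lam: "0 \<le> lam" and t: "0 < t" and b: "0 \<le> \<beta>"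
  shows "((\<lambda>s. \<integral>\<zeta>. f0 N m lam \<beta> E t \<phi> h s \<zeta> \<partial>PiM (sites N) (\<lambda>_. lborel))
     has_real_derivative (\<integral>\<zeta>. f1 N m lam \<beta> E t \<phi> h s0 \<zeta> \<partial>PiM (sites N) (\<lambda>_. lborel))) (at s0)"
  by (rule DERIV_int[OF f0_int[OF N lam t] f1_meas w_int[OF N t, of "sqrt \<beta> * Hm N h"] f0_deriv f1_bound[OF lam b]])

lemma F1_deriv:
  assumes N: "N \<ge> 1" and lam: "0 \<le> lam" and t: "0 < t" and b: "0 \<le> \<beta>"
  shows "((\<lambda>s. \<integral>\<zeta>. f1 N m lam \<beta> E t \<phi> h s \<zeta> \<partial>PiM (sites N) (\<lambda>_. lborel))
     has_real_derivative (\<integral>\<zeta>. f2 N m lam \<beta> E t \<phi> h s0 \<zeta> \<partial>PiM (sites N) (\<lambda>_. lborel))) (at s0)"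
  by (rule DERIV_int[OF f1_int[OF N lam t b] f2_meas w_int[OF N t, of "5 * \<beta> * Hm N h ^ 2"] f1_deriv[OF b] f2_bound[OF lam b]])

lemma vt_pos_form:
  assumes t: "0 < t"
  shows "vt N m lam \<beta> E t \<phi> = - ln ((\<integral>\<zeta>. Hf N m lam \<beta> E t \<phi> \<zeta> \<partial>PiM (sites N) (\<lambda>_. lborel))
      / (\<integral>\<zeta>. exp (- prec_form N m t \<zeta> / 2) \<partial>PiM (sites N) (\<lambda>_. lborel)))"
  using t unfolding vt_def gauss_exp_def Hf_def[abs_def] by simp

lemma vt_zero: "vt N m lam \<beta> E 0 \<phi> = v0 N lam \<beta> E \<phi>"
  unfolding vt_def gauss_exp_def by simp

lemma vt_convex_strict:
  assumes N: "N \<ge> 1" and lam: "0 \<le> lam" and t: "0 \<le> t" and a: "0 < a" "a < 1"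
  shows "vt N m lam \<beta> E t (\<lambda>x. a * \<phi> x + (1 - a) * \<psi> x) \<le> a * vt N m lam \<beta> E t \<phi> + (1 - a) * vt N m lam \<beta> E t \<psi>"
proof (cases "t = 0")
  case True
  then show ?thesis unfolding True vt_zero using v0_convex[OF lam a] by simp
next
  case False
  then have tp: "0 < t" using t by simp
  define Z where "Z = (\<integral>\<zeta>. exp (- prec_form N m t \<zeta> / 2) \<partial>PiM (sites N) (\<lambda>_. lborel))"
  define F where "F = (\<lambda>\<phi>. \<integral>\<zeta>. Hf N m lam \<beta> E t \<phi> \<zeta> \<partial>PiM (sites N) (\<lambda>_. lborel))"
  have Z: "0 < Z" unfolding Z_def by (rule Z_pos[OF N tp])
  have Fp: "0 < F \<phi>'" for \<phi>' unfolding F_def by (rule F_pos[OF N lam tp])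
  have vt: "vt N m lam \<beta> E t \<phi>' = ln Z - ln (F \<phi>')" for \<phi>'
    unfolding vt_pos_form[OF tp] using Fp[of \<phi>'] Z by (simp add: ln_div F_def Z_def)
  have LC: "F \<phi> powr a * F \<psi> powr (1 - a) \<le> F (\<lambda>x. a * \<phi> x + (1 - a) * \<psi> x)"
    unfolding F_def by (rule F_LC[OF N lam tp a])
  have "ln (F \<phi> powr a * F \<psi> powr (1 - a)) \<le> ln (F (\<lambda>x. a * \<phi> x + (1 - a) * \<psi> x))"
    using LC Fp[of \<phi>] Fp[of \<psi>] Fp[of "\<lambda>x. a * \<phi> x + (1 - a) * \<psi> x"] by (subst ln_le_cancel_iff) auto
  moreover have "ln (F \<phi> powr a * F \<psi> powr (1 - a)) = a * ln (F \<phi>) + (1 - a) * ln (F \<psi>)"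
    using Fp[of \<phi>] Fp[of \<psi>] by (simp add: ln_mult ln_powr)
  ultimately show ?thesis unfolding vt by (simp add: algebra_simps)
qed

lemma vt_convex:
  assumes N: "N \<ge> 1" and lam: "0 \<le> lam" and t: "0 \<le> t" and a: "0 \<le> a" "a \<le> 1"
  shows "vt N m lam \<beta> E t (\<lambda>x. a * \<phi> x + (1 - a) * \<psi> x) \<le> a * vt N m lam \<beta> E t \<phi> + (1 - a) * vt N m lam \<beta> E t \<psi>"
proof -
  consider "a = 0" | "a = 1" | "0 < a \<and> a < 1" using a by linarith
  then show ?thesis
  proof cases
    case 1 then show ?thesis by simp
  next
    case 2 then show ?thesis by simp
  next
    case 3 then show ?thesis using vt_convex_strict[OF N lam t] by auto
  qed
qed

lemma line_convex:
  assumes N: "N \<ge> 1" and lam: "0 \<le> lam" and t: "0 \<le> t"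
  shows "convex_on UNIV (\<lambda>s. vt N m lam \<beta> E t (\<lambda>x. \<phi> x + s * h x))"
proof (rule convex_onI)
  fix \<tau> x y :: real assume \<tau>: "0 < \<tau>" "\<tau> < 1"
  have e: "(\<lambda>z. (1 - \<tau>) * (\<phi> z + x * h z) + (1 - (1 - \<tau>)) * (\<phi> z + y * h z))
      = (\<lambda>z. \<phi> z + ((1 - \<tau>) *\<^sub>R x + \<tau> *\<^sub>R y) * h z)"
    by (rule ext) (simp add: algebra_simps)
  have "vt N m lam \<beta> E t (\<lambda>z. (1 - \<tau>) * (\<phi> z + x * h z) + (1 - (1 - \<tau>)) * (\<phi> z + y * h z))
      \<le> (1 - \<tau>) * vt N m lam \<beta> E t (\<lambda>z. \<phi> z + x * h z) + (1 - (1 - \<tau>)) * vt N m lam \<beta> E t (\<lambda>z. \<phi> z + y * h z)"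
    using \<tau> by (intro vt_convex[OF N lam t]) auto
  then show "vt N m lam \<beta> E t (\<lambda>z. \<phi> z + ((1 - \<tau>) *\<^sub>R x + \<tau> *\<^sub>R y) * h z)
      \<le> (1 - \<tau>) * vt N m lam \<beta> E t (\<lambda>z. \<phi> z + x * h z) + \<tau> * vt N m lam \<beta> E t (\<lambda>z. \<phi> z + y * h z)"
    unfolding e by simp
qed simp

lemma line_deriv:
  assumes N: "N \<ge> 1" and lam: "0 \<le> lam" and t: "0 \<le> t" and b: "0 \<le> \<beta>"
  shows "\<exists>g' D. (\<forall>s. ((\<lambda>s. vt N m lam \<beta> E t (\<lambda>x. \<phi> x + s * h x)) has_real_derivative g' s) (at s))
            \<and> (g' has_real_derivative D) (at 0)"
proof (cases "t = 0")
  case True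
  show ?thesis
  proof (intro exI conjI allI)
    fix s
    show "((\<lambda>s. vt N m lam \<beta> E t (\<lambda>x. \<phi> x + s * h x)) has_real_derivative u1 N lam \<beta> E \<phi> h s) (at s)"
      unfolding True vt_zero by (rule u_deriv)
    show "(u1 N lam \<beta> E \<phi> h has_real_derivative u2 N lam \<beta> E \<phi> h 0) (at 0)"
      by (rule u1_deriv[OF b])
  qed
next
  case False
  then have tp: "0 < t" using t by simp
  define Z where "Z = (\<integral>\<zeta>. exp (- prec_form N m t \<zeta> / 2) \<partial>PiM (sites N) (\<lambda>_. lborel))"
  define F where "F = (\<lambda>s. \<integral>\<zeta>. f0 N m lam \<beta> E t \<phi> h s \<zeta> \<partial>PiM (sites N) (\<lambda>_. lborel))"
  define F1 where "F1 = (\<lambda>s. \<integral>\<zeta>. f1 N m lam \<beta> E t \<phi> h s \<zeta> \<partial>PiM (sites N) (\<lambda>_. lborel))"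
  define F2 where "F2 = (\<integral>\<zeta>. f2 N m lam \<beta> E t \<phi> h 0 \<zeta> \<partial>PiM (sites N) (\<lambda>_. lborel))"
  have Z: "0 < Z" unfolding Z_def by (rule Z_pos[OF N tp])
  have Fp: "0 < F s" for s unfolding F_def f0_Hf by (rule F_pos[OF N lam tp])
  have vt: "vt N m lam \<beta> E t (\<lambda>x. \<phi> x + s * h x) = - ln (F s / Z)" for s
    unfolding vt_pos_form[OF tp] F_def f0_Hf Z_def ..
  have dF: "(F has_real_derivative F1 s) (at s)" for s
    unfolding F_def F1_def by (rule F_deriv[OF N lam tp b])
  have dF1: "(F1 has_real_derivative F2) (at 0)"
    unfolding F1_def F2_def by (rule F1_deriv[OF N lam tp b])
  show ?thesis
  proof (intro exI conjI allI)
    fix s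
    have d1: "((\<lambda>s. F s / Z) has_real_derivative F1 s / Z) (at s)"
      by (rule DERIV_cdivide[OF dF])
    have d2: "((\<lambda>s. ln (F s / Z)) has_real_derivative (1 / (F s / Z)) * (F1 s / Z)) (at s)"
      by (rule DERIV_chain2[OF DERIV_ln_divide d1]) (use Fp Z in auto)
    have "((\<lambda>s. - ln (F s / Z)) has_real_derivative - ((1 / (F s / Z)) * (F1 s / Z))) (at s)"
      by (rule DERIV_minus[OF d2])
    moreover have "- ((1 / (F s / Z)) * (F1 s / Z)) = - (F1 s / F s)" using Fp[of s] Z by (simp add: field_simps)
    ultimately show "((\<lambda>s. vt N m lam \<beta> E t (\<lambda>x. \<phi> x + s * h x)) has_real_derivative - (F1 s / F s)) (at s)"
      unfolding vt by simp
  next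
    have "((\<lambda>s. F1 s / F s) has_real_derivative (F2 * F 0 - F1 0 * F1 0) / (F 0 * F 0)) (at 0)"
      by (rule DERIV_divide[OF dF1 dF]) (use Fp in \<open>simp add: less_imp_neq[symmetric]\<close>)
    from DERIV_minus[OF this]
    show "((\<lambda>s. - (F1 s / F s)) has_real_derivative - ((F2 * F 0 - F1 0 * F1 0) / (F 0 * F 0))) (at 0)" .
  qed
qed

theorem mainTheorem5:
  fixes N :: nat and m lam \<beta> t :: real and E :: model
  assumes "N \<ge> 1" and "m > 0" and "lam > 0" and "\<beta> > 0" and "t \<ge> 0"
  shows "(\<forall>\<phi> h :: field. \<exists>g' D.
            (\<forall>s. ((\<lambda>s. vt N m lam \<beta> E t (\<lambda>x. \<phi> x + s * h x)) has_real_derivative g' s) (at s))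
            \<and> (g' has_real_derivative D) (at 0) \<and> D \<ge> 0)
       \<and> (\<forall>\<phi> \<psi> :: field. \<forall>a :: real. 0 \<le> a \<and> a \<le> 1 \<longrightarrow>
            vt N m lam \<beta> E t (\<lambda>x. a * \<phi> x + (1 - a) * \<psi> x)
              \<le> a * vt N m lam \<beta> E t \<phi> + (1 - a) * vt N m lam \<beta> E t \<psi>)"
proof (intro conjI allI impI)
  have N: "N \<ge> 1" and lam: "0 \<le> lam" and t: "0 \<le> t" and b: "0 \<le> \<beta>" using assms by auto
  fix \<phi> h :: field
  obtain g' D where gd: "\<forall>s. ((\<lambda>s. vt N m lam \<beta> E t (\<lambda>x. \<phi> x + s * h x)) has_real_derivative g' s) (at s)"
      "(g' has_real_derivative D) (at 0)"
    using line_deriv[OF N lam t b] by blast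
  have "0 \<le> D" using deriv_convex_nonneg[OF line_convex[OF N lam t] _ gd(2)] gd(1) by blast
  then show "\<exists>g' D. (\<forall>s. ((\<lambda>s. vt N m lam \<beta> E t (\<lambda>x. \<phi> x + s * h x)) has_real_derivative g' s) (at s))
            \<and> (g' has_real_derivative D) (at 0) \<and> D \<ge> 0" using gd by blast
next
  fix \<phi> \<psi> :: field and a :: real
  assume a: "0 \<le> a \<and> a \<le> 1"
  show "vt N m lam \<beta> E t (\<lambda>x. a * \<phi> x + (1 - a) * \<psi> x) \<le> a * vt N m lam \<beta> E t \<phi> + (1 - a) * vt N m lam \<beta> E t \<psi>"
    using vt_convex[of N lam t a] assms a by auto
qed

end
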